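(* Let $f_1,\ldots,f_k:[a,b]\to\mathbb R$ be bounded and continuous almost everywhere, with $\mathcal{ER}(f_j)=[\inf_{[a,b]}f_j,\sup_{[a,b]}f_j]$ for every $j=1,\ldots,k$. Let $\{\Lambda_n=\{\lambda_{1,n},\ldots,\lambda_{d_n,n}\}\}_n$ be a sequence of finite multisets of real numbers with $d_n\to\infty$. Assume: (i) $\{\Lambda_n\}_n$ has an asymptotic distribution described by $f=\mathrm{diag}(f_1,\ldots,f_k)$; (ii) for every $n$ there is a partition $\{\tilde\Lambda_{n,1},\ldots,\tilde\Lambda_{n,k}\}$ of $\Lambda_n$ such that, for every $j$, $|\tilde\Lambda_{n,j}|/d_n\to1/k$ and $\tilde\Lambda_{n,j}\subseteq[\inf_{[a,b]}f_j-\epsilon_n,\sup_{[a,b]}f_j+\epsilon_n]$ for some $\epsilon_n\to0$. Then for every $n$ there is a partition $\{\Lambda_{n,1},\ldots,\Lambda_{n,k}\}$ of $\Lambda_n$ such that for every $j=1,\ldots,k$: (a) $|\Lambda_{n,j}|=|\tilde\Lambda_{n,j}|$; (b) $\Lambda_{n,j}\subseteq[\inf_{[a,b]}f_j-\delta_n,\sup_{[a,b]}f_j+\delta_n]$ for some $\delta_n\to0$; (c) $\{\Lambda_{n,j}\}_n$ has an asymptotic distribution described by $f_j$; (d) writing $\Lambda_{n,j}=\{\lambda^{(j)}_{1,n},\ldots,\lambda^{(j)}_{|\Lambda_{n,j}|,n}\}$, for every asymptotically uniform grid $\{x^{(j)}_{i,n}\}_{i=1,\ldots,|\Lambda_{n,j}|}$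 in $[a,b]$ contained in $[a,b]$, if $\sigma_{n,j},\tau_{n,j}$ are permutations of $\{1,\ldots,|\Lambda_{n,j}|\}$ sorting $[f_j(x^{(j)}_{\sigma_{n,j}(i),n})]_i$ and $[\lambda^{(j)}_{\tau_{n,j}(i),n}]_i$ in increasing order, then $\max_{i}|f_j(x^{(j)}_{\sigma_{n,j}(i),n})-\lambda^{(j)}_{\tau_{n,j}(i),n}|\to0$ as $n\to\infty$; in particular $\min_\tau\max_i|f_j(x^{(j)}_{i,n})-\lambda^{(j)}_{\tau(i),n}|\to0$, the minimum over all permutations $\tau$ of $\{1,\ldots,|\Lambda_{n,j}|\}$.
   Context: For measurable $g:[a,b]\to\mathbb R$, $\mathcal{ER}(g)=\{z\in\mathbb R:\mu_1\{x:|g(x)-z|<\epsilon\}>0\ \forall\epsilon>0\}$. A sequence of finite multisets $\{\Lambda_n=\{\lambda_{1,n},\ldots,\lambda_{d_n,n}\}\}_n$ with $d_n\to\infty$ has an asymptotic distribution described by $\mathrm{diag}(f_1,\ldots,f_k)$ if $\lim_n\frac1{d_n}\sum_{i=1}^{d_n}F(\lambda_{i,n})=\frac1{b-a}\int_a^b\frac{1}{k}\sum_{j=1}^kF(f_j(x))\,dx$ for every continuous $F:\mathbb C\to\mathbb C$ with bounded support; it has an asymptotic distribution described by a scalar $g$ if this holds with $k=1$, $f_1=g$. A sequence of points $\{x_{i,n}\}_{i=1,\ldots,m_n}$ with $m_n\to\infty$ is an asymptotically uniform grid in $[a,b]$ if $\max_{i}|x_{i,n}-(a+i(b-a)/m_n)|\to0$.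 *)

theory Defs
  imports "HOL-Analysis.Analysis" "HOL-Library.Multiset" "HOL-Combinatorics.Permutations"
begin

definition ess_range :: "real \<Rightarrow> real \<Rightarrow> (real \<Rightarrow> real) \<Rightarrow> real set" where
  "ess_range a b g = {z. \<forall>e>0. emeasure lebesgue {x\<in>{a..b}. \<bar>g x - z\<bar> < e} > 0}"

definition has_distr_diag ::
  "real \<Rightarrow> real \<Rightarrow> nat \<Rightarrow> (nat \<Rightarrow> real \<Rightarrow> real) \<Rightarrow> (nat \<Rightarrow> real multiset) \<Rightarrow> bool" where
  "has_distr_diag a b k f L \<longleftrightarrow>
     filterlim (\<lambda>n. size (L n)) at_top sequentially \<and>
     (\<forall>F::complex \<Rightarrow> complex. continuous_on UNIV F \<and> bounded {z. F z \<noteq> 0} \<longrightarrow>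
        (\<lambda>n. (\<Sum>\<^sub># (image_mset (\<lambda>l. F (complex_of_real l)) (L n))) / of_nat (size (L n)))
          \<longlonglongrightarrow> integral {a..b} (\<lambda>x. (\<Sum>j=1..k. F (complex_of_real (f j x))) / of_nat k)
                / complex_of_real (b - a))"

definition has_distr ::
  "real \<Rightarrow> real \<Rightarrow> (real \<Rightarrow> real) \<Rightarrow> (nat \<Rightarrow> real multiset) \<Rightarrow> bool" where
  "has_distr a b g L \<longleftrightarrow>
     filterlim (\<lambda>n. size (L n)) at_top sequentially \<and>
     (\<forall>F::complex \<Rightarrow> complex. continuous_on UNIV F \<and> bounded {z. F z \<noteq> 0} \<longrightarrow>
        (\<lambda>n. (\<Sum>\<^sub># (image_mset (\<lambda>l. F (complex_of_real l)) (L n))) / of_nat (size (L n)))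
          \<longlonglongrightarrow> integral {a..b} (\<lambda>x. F (complex_of_real (g x))) / complex_of_real (b - a))"

definition asym_unif_grid :: "real \<Rightarrow> real \<Rightarrow> (nat \<Rightarrow> nat) \<Rightarrow> (nat \<Rightarrow> nat \<Rightarrow> real) \<Rightarrow> bool" where
  "asym_unif_grid a b m x \<longleftrightarrow>
     filterlim m at_top sequentially \<and>
     (\<lambda>n. Max ((\<lambda>i. \<bar>x n i - (a + real i * (b - a) / real (m n))\<bar>) ` {1..m n})) \<longlonglongrightarrow> 0"

end

theory Submission
  imports Defs "HOL-Probability.Weak_Convergence"
begin

definition testf :: "(complex \<Rightarrow> complex) \<Rightarrow> bool" where
  "testf F \<longleftrightarrow> continuous_on UNIV F \<and> bounded {z. F z \<noteq> 0}"

definition dsum :: "(complex \<Rightarrow> complex) \<Rightarrow> real multiset \<Rightarrow> complex" where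
  "dsum F M = (\<Sum>\<^sub># (image_mset (\<lambda>l. F (complex_of_real l)) M)) / of_nat (size M)"

definition conv_to :: "(nat \<Rightarrow> real multiset) \<Rightarrow> ((complex \<Rightarrow> complex) \<Rightarrow> complex) \<Rightarrow> bool" where
  "conv_to L \<Phi> \<longleftrightarrow> (\<forall>F. testf F \<longrightarrow> (\<lambda>n. dsum F (L n)) \<longlonglongrightarrow> \<Phi> F)"

definition cplx :: "(real \<Rightarrow> real) \<Rightarrow> complex \<Rightarrow> complex" where
  "cplx h z = complex_of_real (h (Re z) * max 0 (1 - \<bar>Im z\<bar>))"

definition trap :: "real \<Rightarrow> real \<Rightarrow> real \<Rightarrow> real \<Rightarrow> real \<Rightarrow> real" where
  "trap p q r s t = max 0 (min 1 (min ((t - p) / (q - p)) ((s - t) / (s - r))))"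

lemma dsum_mset: "dsum F (mset xs) = sum_list (map (\<lambda>l. F (complex_of_real l)) xs) / of_nat (length xs)"
  unfolding dsum_def by (metis mset_map size_mset sum_mset_sum_list)

lemma cplx_real[simp]: "cplx h (complex_of_real t) = complex_of_real (h t)"
  by (simp add: cplx_def)

lemma testf_cplx:
  assumes "continuous_on UNIV h" "\<And>t. t \<notin> {p..q} \<Longrightarrow> h t = 0"
  shows "testf (cplx h)"
proof -
  have "continuous_on UNIV (\<lambda>z. complex_of_real (h (Re z) * max 0 (1 - \<bar>Im z\<bar>)))"
    by (intro continuous_intros continuous_on_compose2[OF assms(1)]) auto
  moreover have "{z. cplx h z \<noteq> 0} \<subseteq> cbox (Complex p (-1)) (Complex q 1)"
  proof
    fix z assume "z \<in> {z. cplx h z \<noteq> 0}"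
    hence "h (Re z) \<noteq> 0" "max 0 (1 - \<bar>Im z\<bar>) \<noteq> 0" by (auto simp: cplx_def)
    hence "Re z \<in> {p..q}" "\<bar>Im z\<bar> \<le> 1" using assms(2) by (force, linarith)
    thus "z \<in> cbox (Complex p (-1)) (Complex q 1)" by (auto simp: cbox_complex_eq)
  qed
  hence "bounded {z. cplx h z \<noteq> 0}" using bounded_cbox bounded_subset by blast
  ultimately show ?thesis unfolding testf_def cplx_def[abs_def] by simp
qed

lemma trap_cont: "p < q \<Longrightarrow> r < s \<Longrightarrow> continuous_on UNIV (trap p q r s)"
  unfolding trap_def[abs_def] by (intro continuous_intros) auto

lemma trap_ge0: "trap p q r s t \<ge> 0" by (simp add: trap_def)
lemma trap_le1: "trap p q r s t \<le> 1" by (simp add: trap_def)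
lemma trap_out: "p < q \<Longrightarrow> r < s \<Longrightarrow> t \<le> p \<or> s \<le> t \<Longrightarrow> trap p q r s t = 0"
proof -
  assume a: "p < q" "r < s" "t \<le> p \<or> s \<le> t"
  have "(t - p) / (q - p) \<le> 0 \<or> (s - t) / (s - r) \<le> 0"
    using a by (auto simp: divide_le_0_iff)
  hence "min 1 (min ((t - p) / (q - p)) ((s - t) / (s - r))) \<le> 0" by linarith
  thus ?thesis unfolding trap_def by simp
qed
lemma trap_one: "p < q \<Longrightarrow> r < s \<Longrightarrow> q \<le> t \<Longrightarrow> t \<le> r \<Longrightarrow> trap p q r s t = 1"
  unfolding trap_def by (auto simp: min_def max_def field_simps)
lemma trap_right0: "p < q \<Longrightarrow> r < s \<Longrightarrow> s \<le> t \<Longrightarrow> trap p q r s t = 0"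
  using trap_out by blast
lemma trap_mono: "p < q \<Longrightarrow> 0 < e \<Longrightarrow> u + e \<le> v - e \<Longrightarrow> trap p q u (u+e) t \<le> trap p q (v-e) v t"
proof -
  assume a: "p < q" "0 < e" "u + e \<le> v - e"
  have "(u + e - t) / (u + e - u) \<le> (v - t) / (v - (v - e))"
    using a by (simp add: divide_right_mono)
  thus ?thesis unfolding trap_def by (intro max.mono min.mono) auto
qed

lemma testf_trap_diff:
  assumes "p < q" "r1 < s1" "r2 < s2"
  shows "testf (cplx (\<lambda>t. trap p q r1 s1 t - trap p q r2 s2 t))"
proof (rule testf_cplx[where p=p and q="max s1 s2"])
  show "continuous_on UNIV (\<lambda>t. trap p q r1 s1 t - trap p q r2 s2 t)"
    using assms by (intro continuous_on_diff trap_cont) auto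
  fix t assume "t \<notin> {p..max s1 s2}"
  hence "t \<le> p \<or> s1 \<le> t" "t \<le> p \<or> s2 \<le> t" by auto
  thus "trap p q r1 s1 t - trap p q r2 s2 t = 0" using assms trap_out[of p q] by simp
qed

lemma testf_trap:
  assumes "p < q" "r < s"
  shows "testf (cplx (trap p q r s))"
proof (rule testf_cplx[where p=p and q=s])
  show "continuous_on UNIV (trap p q r s)" using assms by (rule trap_cont)
  fix t assume "t \<notin> {p..s}"
  thus "trap p q r s t = 0" using assms trap_out[of p q r s t] by auto
qed

lemma length_filter_mono': "(\<And>x. P x \<Longrightarrow> Q x) \<Longrightarrow> length (filter P xs) \<le> length (filter Q xs)"
  by (induction xs) auto

lemma dsum_diff: "dsum (cplx (\<lambda>t. h2 t - h1 t)) (mset xs) = dsum (cplx h2) (mset xs) - dsum (cplx h1) (mset xs)"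
proof -
  have "(\<Sum>l\<leftarrow>xs. complex_of_real (h2 l - h1 l)) = (\<Sum>l\<leftarrow>xs. complex_of_real (h2 l)) - (\<Sum>l\<leftarrow>xs. complex_of_real (h1 l))"
    by (induction xs) auto
  thus ?thesis unfolding dsum_mset by (simp add: diff_divide_distrib)
qed

lemma dsum_cplx: "dsum (cplx h) (mset xs) = complex_of_real (sum_list (map h xs) / real (length xs))"
proof -
  have "(\<Sum>l\<leftarrow>xs. complex_of_real (h l)) = complex_of_real (sum_list (map h xs))"
    by (induction xs) auto
  thus ?thesis unfolding dsum_mset by simp
qed

lemma sum_list_ge_count:
  fixes h :: "real \<Rightarrow> real"
  assumes "\<And>t. t \<in> set xs \<Longrightarrow> h t \<ge> 0" "\<And>t. t \<in> set xs \<Longrightarrow> P t \<Longrightarrow> h t \<ge> 1"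
  shows "real (length (filter P xs)) \<le> sum_list (map h xs)"
  using assms
proof (induction xs)
  case (Cons a xs)
  have h1: "h a \<ge> 0" using Cons.prems by simp
  have h2: "P a \<Longrightarrow> h a \<ge> 1" using Cons.prems by simp
  have ih: "real (length (filter P xs)) \<le> sum_list (map h xs)" using Cons.prems by (intro Cons.IH) auto
  show ?case using ih h1 h2 by (cases "P a") auto
qed simp

lemma sum_list_le_count:
  fixes h :: "real \<Rightarrow> real"
  assumes "\<And>t. t \<in> set xs \<Longrightarrow> h t \<le> 1" "\<And>t. t \<in> set xs \<Longrightarrow> \<not> P t \<Longrightarrow> h t \<le> 0"
  shows "sum_list (map h xs) \<le> real (length (filter P xs))"
  using assms
proof (induction xs)
  case (Cons a xs)
  have h1: "h a \<le> 1" using Cons.prems by simp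
  have h2: "\<not> P a \<Longrightarrow> h a \<le> 0" using Cons.prems by simp
  have ih: "sum_list (map h xs) \<le> real (length (filter P xs))" using Cons.prems by (intro Cons.IH) auto
  show ?case using ih h1 h2 by (cases "P a") auto
qed simp

lemma sorted_count_ge:
  fixes xs :: "real list"
  assumes "sorted xs" "i < length xs" "xs ! i \<le> u"
  shows "Suc i \<le> length (filter (\<lambda>t. t \<le> u) xs)"
proof -
  have "xs = take (Suc i) xs @ drop (Suc i) xs" by simp
  hence "length (filter (\<lambda>t. t \<le> u) xs) \<ge> length (filter (\<lambda>t. t \<le> u) (take (Suc i) xs))"
    by (metis filter_append length_append le_add1)
  moreover have "filter (\<lambda>t. t \<le> u) (take (Suc i) xs) = take (Suc i) xs"
  proof (rule filter_True, intro ballI)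
    fix t assume "t \<in> set (take (Suc i) xs)"
    then obtain k where "k < length (take (Suc i) xs)" "take (Suc i) xs ! k = t" by (auto simp: in_set_conv_nth)
    hence "k \<le> i" "xs ! k = t" using assms by auto
    hence "t \<le> xs ! i" using assms sorted_nth_mono by blast
    thus "t \<le> u" using assms by simp
  qed
  ultimately show ?thesis using assms by simp
qed

lemma sorted_count_le:
  fixes ys :: "real list"
  assumes "sorted ys" "i < length ys" "v \<le> ys ! i"
  shows "length (filter (\<lambda>t. t < v) ys) \<le> i"
proof -
  have "ys = take i ys @ drop i ys" by simp
  moreover have "filter (\<lambda>t. t < v) (drop i ys) = []"
  proof (rule filter_False, intro ballI)
    fix t assume "t \<in> set (drop i ys)"
    then obtain k where "k < length (drop i ys)" "drop i ys ! k = t" by (auto simp: in_set_conv_nth)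
    hence "ys ! (i + k) = t" "i + k < length ys" using assms by auto
    hence "ys ! i \<le> t" using assms sorted_nth_mono[of ys i "i+k"] by auto
    thus "\<not> t < v" using assms by simp
  qed
  ultimately have "length (filter (\<lambda>t. t < v) ys) = length (filter (\<lambda>t. t < v) (take i ys))"
    by (metis append.right_neutral filter_append)
  also have "\<dots> \<le> length (take i ys)" by (rule length_filter_le)
  finally show ?thesis by simp
qed

lemma tendsto_frequently_nonneg:
  fixes X :: "nat \<Rightarrow> real"
  assumes "X \<longlonglongrightarrow> L" "frequently (\<lambda>n. X n \<ge> 0) sequentially"
  shows "L \<ge> 0"
proof (rule ccontr)
  assume "\<not> L \<ge> 0"
  hence "eventually (\<lambda>n. X n < 0) sequentially"
    using assms(1) order_tendstoD(2)[of X L sequentially 0] by auto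
  thus False using assms(2) by (simp add: frequently_def eventually_mono)
qed

definition gapcond :: "((complex \<Rightarrow> complex) \<Rightarrow> complex) \<Rightarrow> (nat \<Rightarrow> real list) \<Rightarrow> (nat \<Rightarrow> real list) \<Rightarrow> bool" where
  "gapcond \<Phi> xs ys \<longleftrightarrow> (\<forall>u v. u < v \<longrightarrow>
     (\<forall>G. testf G \<and> (\<forall>t. Re (G (complex_of_real t)) \<ge> 0) \<and> (\<forall>t\<in>{u..v}. Re (G (complex_of_real t)) \<ge> 1) \<longrightarrow> Re (\<Phi> G) > 0)
     \<or> eventually (\<lambda>n. length (filter (\<lambda>t. t \<le> (u+v)/2) (xs n)) = length (filter (\<lambda>t. t \<le> (u+v)/2) (ys n))) sequentially)"

lemma sort_core:
  fixes xs ys :: "nat \<Rightarrow> real list"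
  assumes len: "\<And>n. length (xs n) = length (ys n)"
    and sx: "\<And>n. sorted (xs n)" and sy: "\<And>n. sorted (ys n)"
    and cx: "conv_to (\<lambda>n. mset (xs n)) \<Phi>" and cy: "conv_to (\<lambda>n. mset (ys n)) \<Phi>"
    and gap: "gapcond \<Phi> xs ys"
    and e: "0 < e" and cu: "c \<le> u" and uv: "u + 3*e \<le> v"
  shows "\<not> frequently (\<lambda>n. set (xs n) \<subseteq> {c..} \<and> (\<exists>i<length (xs n). xs n ! i \<le> u \<and> v \<le> ys n ! i)) sequentially"
proof
  assume fr: "frequently (\<lambda>n. set (xs n) \<subseteq> {c..} \<and> (\<exists>i<length (xs n). xs n ! i \<le> u \<and> v \<le> ys n ! i)) sequentially"
  have fr2: "frequently (\<lambda>n. set (xs n) \<subseteq> {c..} \<and> length (filter (\<lambda>t. t \<le> u) (xs n)) > length (filter (\<lambda>t. t < v) (ys n))) sequentially"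
  proof (rule frequently_elim1[OF fr])
    fix n assume "set (xs n) \<subseteq> {c..} \<and> (\<exists>i<length (xs n). xs n ! i \<le> u \<and> v \<le> ys n ! i)"
    then obtain i where i: "i < length (xs n)" "xs n ! i \<le> u" "v \<le> ys n ! i" and sc: "set (xs n) \<subseteq> {c..}" by blast
    have "Suc i \<le> length (filter (\<lambda>t. t \<le> u) (xs n))" using sorted_count_ge[OF sx i(1,2)] .
    moreover have "length (filter (\<lambda>t. t < v) (ys n)) \<le> i" using sorted_count_le[OF sy _ i(3)] i(1) len by simp
    ultimately show "set (xs n) \<subseteq> {c..} \<and> length (filter (\<lambda>t. t \<le> u) (xs n)) > length (filter (\<lambda>t. t < v) (ys n))"
      using sc by simp
  qed
  have uv': "u + e < v - e" using e uv by simp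
  from gap uv' consider
    (pos) "\<forall>G. testf G \<and> (\<forall>t. Re (G (complex_of_real t)) \<ge> 0) \<and> (\<forall>t\<in>{u+e..v-e}. Re (G (complex_of_real t)) \<ge> 1) \<longrightarrow> Re (\<Phi> G) > 0"
    | (cnt) "eventually (\<lambda>n. length (filter (\<lambda>t. t \<le> ((u+e)+(v-e))/2) (xs n)) = length (filter (\<lambda>t. t \<le> ((u+e)+(v-e))/2) (ys n))) sequentially"
    unfolding gapcond_def by blast
  then show False
  proof cases
    case cnt
    from frequently_eventually_frequently[OF fr2 cnt] obtain n where
      n: "length (filter (\<lambda>t. t \<le> u) (xs n)) > length (filter (\<lambda>t. t < v) (ys n))"
         "length (filter (\<lambda>t. t \<le> ((u+e)+(v-e))/2) (xs n)) = length (filter (\<lambda>t. t \<le> ((u+e)+(v-e))/2) (ys n))"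
      by (auto dest: frequently_ex)
    have "length (filter (\<lambda>t. t \<le> u) (xs n)) \<le> length (filter (\<lambda>t. t \<le> ((u+e)+(v-e))/2) (xs n))"
      by (rule length_filter_mono') (use uv e in simp)
    moreover have "length (filter (\<lambda>t. t \<le> ((u+e)+(v-e))/2) (ys n)) \<le> length (filter (\<lambda>t. t < v) (ys n))"
      by (rule length_filter_mono') (use uv e in simp)
    ultimately show False using n by linarith
  next
    case pos
    define p where "p = c - 2"
    define q where "q = c - 1"
    have pq: "p < q" by (simp add: p_def q_def)
    define h1 where "h1 = trap p q u (u+e)"
    define h2 where "h2 = trap p q (v-e) v"
    define G where "G = cplx (\<lambda>t. h2 t - h1 t)"
    have tG: "testf G" unfolding G_def h1_def h2_def by (rule testf_trap_diff) (use pq e in auto)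
    have t1: "testf (cplx h1)" unfolding h1_def by (rule testf_trap) (use pq e in auto)
    have t2: "testf (cplx h2)" unfolding h2_def by (rule testf_trap) (use pq e in auto)
    have "Re (\<Phi> G) > 0"
    proof (rule pos[rule_format], intro conjI allI ballI)
      show "testf G" by fact
      fix t
      have "h1 t \<le> h2 t" unfolding h1_def h2_def by (rule trap_mono) (use pq e uv in auto)
      thus "Re (G (complex_of_real t)) \<ge> 0" by (simp add: G_def)
    next
      fix t assume t: "t \<in> {u+e..v-e}"
      have "h1 t = 0" unfolding h1_def by (rule trap_out) (use pq e t in auto)
      moreover have "h2 t = 1" unfolding h2_def by (rule trap_one) (use pq e t cu q_def in auto)
      ultimately show "Re (G (complex_of_real t)) \<ge> 1" by (simp add: G_def)
    qed
    have lx1: "(\<lambda>n. dsum (cplx h1) (mset (xs n))) \<longlonglongrightarrow> \<Phi> (cplx h1)" using cx t1 unfolding conv_to_def by blast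
    have ly1: "(\<lambda>n. dsum (cplx h1) (mset (ys n))) \<longlonglongrightarrow> \<Phi> (cplx h1)" using cy t1 unfolding conv_to_def by blast
    have ly2: "(\<lambda>n. dsum (cplx h2) (mset (ys n))) \<longlonglongrightarrow> \<Phi> (cplx h2)" using cy t2 unfolding conv_to_def by blast
    have lyG: "(\<lambda>n. dsum G (mset (ys n))) \<longlonglongrightarrow> \<Phi> G" using cy tG unfolding conv_to_def by blast
    have "(\<lambda>n. dsum G (mset (ys n))) \<longlonglongrightarrow> \<Phi> (cplx h2) - \<Phi> (cplx h1)"
      unfolding G_def dsum_diff by (intro tendsto_diff ly2 ly1)
    hence PG: "\<Phi> G = \<Phi> (cplx h2) - \<Phi> (cplx h1)" using lyG LIMSEQ_unique by blast
    have "(\<lambda>n. Re (dsum (cplx h1) (mset (xs n)) - dsum (cplx h2) (mset (ys n)))) \<longlonglongrightarrow> Re (\<Phi> (cplx h1) - \<Phi> (cplx h2))"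
      by (intro tendsto_Re tendsto_diff lx1 ly2)
    moreover have "frequently (\<lambda>n. Re (dsum (cplx h1) (mset (xs n)) - dsum (cplx h2) (mset (ys n))) \<ge> 0) sequentially"
    proof (rule frequently_elim1[OF fr2])
      fix n assume nn: "set (xs n) \<subseteq> {c..} \<and> length (filter (\<lambda>t. t \<le> u) (xs n)) > length (filter (\<lambda>t. t < v) (ys n))"
      have "real (length (filter (\<lambda>t. t \<le> u) (xs n))) \<le> sum_list (map h1 (xs n))"
      proof (rule sum_list_ge_count)
        fix t show "h1 t \<ge> 0" unfolding h1_def by (rule trap_ge0)
        assume "t \<in> set (xs n)" "t \<le> u"
        hence "h1 t = 1" unfolding h1_def using nn by (intro trap_one) (use pq e q_def in auto)
        thus "h1 t \<ge> 1" by simp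
      qed
      moreover have "sum_list (map h2 (ys n)) \<le> real (length (filter (\<lambda>t. t < v) (ys n)))"
      proof (rule sum_list_le_count)
        fix t show "h2 t \<le> 1" unfolding h2_def by (rule trap_le1)
        assume "t \<in> set (ys n)" "\<not> t < v"
        hence "h2 t = 0" unfolding h2_def by (intro trap_out) (use pq e in auto)
        thus "h2 t \<le> 0" by simp
      qed
      ultimately have "sum_list (map h2 (ys n)) \<le> sum_list (map h1 (xs n))" using nn by linarith
      hence "sum_list (map h2 (ys n)) / real (length (xs n)) \<le> sum_list (map h1 (xs n)) / real (length (xs n))"
        by (simp add: divide_right_mono)
      thus "Re (dsum (cplx h1) (mset (xs n)) - dsum (cplx h2) (mset (ys n))) \<ge> 0"
        unfolding dsum_cplx using len[of n] by simp
    qed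
    ultimately have "Re (\<Phi> (cplx h1) - \<Phi> (cplx h2)) \<ge> 0" by (rule tendsto_frequently_nonneg)
    with PG \<open>Re (\<Phi> G) > 0\<close> show False by simp
  qed
qed


lemma sort_onesided:
  fixes xs ys :: "nat \<Rightarrow> real list"
  assumes len: "\<And>n. length (xs n) = length (ys n)"
    and sx: "\<And>n. sorted (xs n)" and sy: "\<And>n. sorted (ys n)"
    and cx: "conv_to (\<lambda>n. mset (xs n)) \<Phi>" and cy: "conv_to (\<lambda>n. mset (ys n)) \<Phi>"
    and gap: "gapcond \<Phi> xs ys"
    and bnd: "eventually (\<lambda>n. set (xs n) \<union> set (ys n) \<subseteq> {c..d}) sequentially"
    and e: "0 < e"
  shows "eventually (\<lambda>n. \<forall>i<length (xs n). ys n ! i - xs n ! i < e) sequentially"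
proof (rule ccontr)
  assume "\<not> ?thesis"
  hence fr: "frequently (\<lambda>n. \<exists>i<length (xs n). ys n ! i - xs n ! i \<ge> e) sequentially"
    by (simp add: not_eventually not_less)
  define \<epsilon> where "\<epsilon> = e / 5"
  have ep: "\<epsilon> > 0" using e by (simp add: \<epsilon>_def)
  define M where "M = \<lceil>(d - c) / \<epsilon>\<rceil>"
  define pt where "pt = (\<lambda>l::int. c + of_int l * \<epsilon>)"
  have "frequently (\<lambda>n. \<exists>l1\<in>{0..M}. \<exists>l2\<in>{0..M}. pt l1 + 3 * \<epsilon> \<le> pt l2 \<and>
      (set (xs n) \<subseteq> {c..} \<and> (\<exists>i<length (xs n). xs n ! i \<le> pt l1 \<and> pt l2 \<le> ys n ! i))) sequentially"
  proof (rule frequently_mp[OF _ fr], rule eventually_mono[OF bnd], intro impI)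
    fix n assume b: "set (xs n) \<union> set (ys n) \<subseteq> {c..d}" and "\<exists>i<length (xs n). ys n ! i - xs n ! i \<ge> e"
    then obtain i where i: "i < length (xs n)" "ys n ! i - xs n ! i \<ge> e" by blast
    define x where "x = xs n ! i"
    define y where "y = ys n ! i"
    have xr: "x \<in> {c..d}" using b i(1) unfolding x_def by (auto simp: set_conv_nth)
    have yr: "y \<in> {c..d}" using b i(1) len[of n] unfolding y_def by (auto simp: set_conv_nth)
    define l1 where "l1 = \<lceil>(x - c) / \<epsilon>\<rceil>"
    define l2 where "l2 = \<lfloor>(y - c) / \<epsilon>\<rfloor>"
    have q1: "0 \<le> (x - c) / \<epsilon>" "(x - c) / \<epsilon> \<le> (d - c) / \<epsilon>" using xr ep
      by (simp_all add: divide_right_mono)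
    have q2: "0 \<le> (y - c) / \<epsilon>" "(y - c) / \<epsilon> \<le> (d - c) / \<epsilon>" using yr ep
      by (simp_all add: divide_right_mono)
    have l1r: "l1 \<in> {0..M}" unfolding l1_def M_def using q1 ceiling_mono by auto
    have l2r: "l2 \<in> {0..M}" unfolding l2_def M_def using q2 ceiling_mono
      by (auto intro: order_trans[OF floor_le_ceiling])
    have c1: "x \<le> pt l1" "pt l1 < x + \<epsilon>"
    proof -
      have "(x - c) / \<epsilon> \<le> of_int l1" "of_int l1 < (x - c) / \<epsilon> + 1"
        unfolding l1_def by (simp, linarith)
      hence "x - c \<le> of_int l1 * \<epsilon>" "of_int l1 * \<epsilon> < x - c + \<epsilon>"
        using ep by (simp_all add: field_simps)
      thus "x \<le> pt l1" "pt l1 < x + \<epsilon>" by (simp_all add: pt_def)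
    qed
    have c2: "pt l2 \<le> y" "y < pt l2 + \<epsilon>"
    proof -
      have "of_int l2 \<le> (y - c) / \<epsilon>" "(y - c) / \<epsilon> < of_int l2 + 1"
        unfolding l2_def by (simp, linarith)
      hence "of_int l2 * \<epsilon> \<le> y - c" "y - c < of_int l2 * \<epsilon> + \<epsilon>"
        using ep by (simp_all add: field_simps)
      thus "pt l2 \<le> y" "y < pt l2 + \<epsilon>" by (simp_all add: pt_def)
    qed
    have "pt l1 + 3 * \<epsilon> \<le> pt l2" using c1 c2 i(2) unfolding x_def y_def \<epsilon>_def by simp
    moreover have "set (xs n) \<subseteq> {c..}" using b by auto
    ultimately show "\<exists>l1\<in>{0..M}. \<exists>l2\<in>{0..M}. pt l1 + 3 * \<epsilon> \<le> pt l2 \<and>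
      (set (xs n) \<subseteq> {c..} \<and> (\<exists>i<length (xs n). xs n ! i \<le> pt l1 \<and> pt l2 \<le> ys n ! i))"
      using l1r l2r i(1) c1(1) c2(1) unfolding x_def y_def by blast
  qed
  hence "\<exists>l1\<in>{0..M}. frequently (\<lambda>n. \<exists>l2\<in>{0..M}. pt l1 + 3 * \<epsilon> \<le> pt l2 \<and>
      (set (xs n) \<subseteq> {c..} \<and> (\<exists>i<length (xs n). xs n ! i \<le> pt l1 \<and> pt l2 \<le> ys n ! i))) sequentially"
    by (rule frequently_bex_finite[rotated]) simp
  then obtain l1 where "l1 \<in> {0..M}" and "frequently (\<lambda>n. \<exists>l2\<in>{0..M}. pt l1 + 3 * \<epsilon> \<le> pt l2 \<and>
      (set (xs n) \<subseteq> {c..} \<and> (\<exists>i<length (xs n). xs n ! i \<le> pt l1 \<and> pt l2 \<le> ys n ! i))) sequentially"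
    by blast
  hence "\<exists>l2\<in>{0..M}. frequently (\<lambda>n. pt l1 + 3 * \<epsilon> \<le> pt l2 \<and>
      (set (xs n) \<subseteq> {c..} \<and> (\<exists>i<length (xs n). xs n ! i \<le> pt l1 \<and> pt l2 \<le> ys n ! i))) sequentially"
    by (intro frequently_bex_finite[rotated]) simp_all
  then obtain l2 where fr3: "frequently (\<lambda>n. pt l1 + 3 * \<epsilon> \<le> pt l2 \<and>
      (set (xs n) \<subseteq> {c..} \<and> (\<exists>i<length (xs n). xs n ! i \<le> pt l1 \<and> pt l2 \<le> ys n ! i))) sequentially"
    by blast
  have uv: "pt l1 + 3 * \<epsilon> \<le> pt l2" using frequently_ex[OF fr3] by blast
  have fr4: "frequently (\<lambda>n. set (xs n) \<subseteq> {c..} \<and> (\<exists>i<length (xs n). xs n ! i \<le> pt l1 \<and> pt l2 \<le> ys n ! i)) sequentially"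
    by (rule frequently_elim1[OF fr3]) (rule conjunct2)
  have "0 \<le> of_int l1 * \<epsilon>" using \<open>l1 \<in> {0..M}\<close> ep by simp
  hence "c \<le> pt l1" by (simp add: pt_def)
  from sort_core[OF len sx sy cx cy gap ep this uv] fr4 show False by blast
qed

lemma sort_match:
  fixes xs ys :: "nat \<Rightarrow> real list"
  assumes len: "\<And>n. length (xs n) = length (ys n)"
    and sx: "\<And>n. sorted (xs n)" and sy: "\<And>n. sorted (ys n)"
    and cx: "conv_to (\<lambda>n. mset (xs n)) \<Phi>" and cy: "conv_to (\<lambda>n. mset (ys n)) \<Phi>"
    and gap: "gapcond \<Phi> xs ys"
    and bnd: "eventually (\<lambda>n. set (xs n) \<union> set (ys n) \<subseteq> {c..d}) sequentially"
    and e: "0 < e"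
  shows "eventually (\<lambda>n. \<forall>i<length (xs n). \<bar>xs n ! i - ys n ! i\<bar> < e) sequentially"
proof -
  have gap': "gapcond \<Phi> ys xs"
    unfolding gapcond_def
  proof (intro allI impI)
    fix u v :: real assume "u < v"
    thus "(\<forall>G. testf G \<and> (\<forall>t. Re (G (complex_of_real t)) \<ge> 0) \<and> (\<forall>t\<in>{u..v}. Re (G (complex_of_real t)) \<ge> 1) \<longrightarrow> Re (\<Phi> G) > 0)
     \<or> eventually (\<lambda>n. length (filter (\<lambda>t. t \<le> (u+v)/2) (ys n)) = length (filter (\<lambda>t. t \<le> (u+v)/2) (xs n))) sequentially"
    proof -
      from gap \<open>u < v\<close> have "(\<forall>G. testf G \<and> (\<forall>t. Re (G (complex_of_real t)) \<ge> 0) \<and> (\<forall>t\<in>{u..v}. Re (G (complex_of_real t)) \<ge> 1) \<longrightarrow> Re (\<Phi> G) > 0)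
     \<or> eventually (\<lambda>n. length (filter (\<lambda>t. t \<le> (u+v)/2) (xs n)) = length (filter (\<lambda>t. t \<le> (u+v)/2) (ys n))) sequentially"
        unfolding gapcond_def by blast
      thus ?thesis
      proof (elim disjE)
        assume "eventually (\<lambda>n. length (filter (\<lambda>t. t \<le> (u+v)/2) (xs n)) = length (filter (\<lambda>t. t \<le> (u+v)/2) (ys n))) sequentially"
        hence "eventually (\<lambda>n. length (filter (\<lambda>t. t \<le> (u+v)/2) (ys n)) = length (filter (\<lambda>t. t \<le> (u+v)/2) (xs n))) sequentially"
          by (rule eventually_mono) simp
        thus ?thesis by blast
      qed blast
    qed
  qed
  have bnd': "eventually (\<lambda>n. set (ys n) \<union> set (xs n) \<subseteq> {c..d}) sequentially"
    using bnd by (simp add: Un_commute)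
  have 1: "eventually (\<lambda>n. \<forall>i<length (xs n). ys n ! i - xs n ! i < e) sequentially"
    by (rule sort_onesided[OF len sx sy cx cy gap bnd e])
  have 2: "eventually (\<lambda>n. \<forall>i<length (ys n). xs n ! i - ys n ! i < e) sequentially"
    by (rule sort_onesided[OF len[symmetric] sy sx cy cx gap' bnd' e])
  show ?thesis using eventually_conj[OF 1 2]
  proof (rule eventually_mono)
    fix n assume a: "(\<forall>i<length (xs n). ys n ! i - xs n ! i < e) \<and> (\<forall>i<length (ys n). xs n ! i - ys n ! i < e)"
    show "\<forall>i<length (xs n). \<bar>xs n ! i - ys n ! i\<bar> < e"
    proof (intro allI impI)
      fix i assume "i < length (xs n)"
      hence "ys n ! i - xs n ! i < e" "xs n ! i - ys n ! i < e" using a len[of n] by auto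
      thus "\<bar>xs n ! i - ys n ! i\<bar> < e" by (simp add: abs_less_iff)
    qed
  qed
qed

lemma testf_support:
  assumes "testf F" obtains R where "R > 0" "\<And>z. norm z > R \<Longrightarrow> F z = 0"
proof -
  have "bounded {z. F z \<noteq> 0}" using assms by (simp add: testf_def)
  then obtain R where R: "R > 0" "\<And>z. F z \<noteq> 0 \<Longrightarrow> norm z \<le> R" by (auto simp: bounded_pos)
  show ?thesis by (rule that[OF R(1)]) (use R(2) in force)
qed

lemma testf_bounded:
  assumes "testf F" obtains B where "\<And>z. norm (F z) \<le> B"
proof -
  obtain R where R: "R > 0" "\<And>z. norm z > R \<Longrightarrow> F z = 0" using testf_support[OF assms] by blast
  have "continuous_on (cball 0 R) F" using assms by (auto simp: testf_def intro: continuous_on_subset)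
  hence "compact (F ` cball 0 R)" by (intro compact_continuous_image) auto
  then obtain B where B: "\<And>w. w \<in> F ` cball 0 R \<Longrightarrow> norm w \<le> B"
    using compact_imp_bounded bounded_iff by metis
  have "norm (F z) \<le> max B 0" for z
  proof (cases "norm z \<le> R")
    case True thus ?thesis using B[of "F z"] by auto
  next
    case False thus ?thesis using R(2)[of z] by auto
  qed
  thus ?thesis using that by blast
qed

lemma testf_ucont:
  assumes "testf F" shows "uniformly_continuous_on UNIV F"
proof -
  obtain R where R: "R > 0" "\<And>z. norm z > R \<Longrightarrow> F z = 0" using testf_support[OF assms] by blast
  have "continuous_on (cball 0 (R+1)) F" using assms by (auto simp: testf_def intro: continuous_on_subset)
  hence uc: "uniformly_continuous_on (cball 0 (R+1)) F" by (intro compact_uniformly_continuous) auto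
  show ?thesis unfolding uniformly_continuous_on_def
  proof (intro allI impI)
    fix e :: real assume e: "e > 0"
    then obtain d where d: "d > 0" "\<And>x x'. x \<in> cball 0 (R+1) \<Longrightarrow> x' \<in> cball 0 (R+1) \<Longrightarrow> dist x' x < d \<Longrightarrow> dist (F x') (F x) < e"
      using uc unfolding uniformly_continuous_on_def by metis
    show "\<exists>d>0. \<forall>x\<in>UNIV. \<forall>x'\<in>UNIV. dist x' x < d \<longrightarrow> dist (F x') (F x) < e"
    proof (intro exI[of _ "min d 1"] conjI ballI impI)
      fix x x' :: complex assume dx: "dist x' x < min d 1"
      show "dist (F x') (F x) < e"
      proof (cases "norm x \<le> R + 1 \<and> norm x' \<le> R + 1")
        case True thus ?thesis using d dx by auto
      next
        case False
        have "norm x' \<le> norm x + dist x' x" "norm x \<le> norm x' + dist x' x"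
          using norm_triangle_ineq[of x "x' - x"] norm_triangle_ineq[of x' "x - x'"]
          by (simp_all add: dist_norm norm_minus_commute)
        hence "norm x > R \<and> norm x' > R" using False dx by auto
        thus ?thesis using R e by simp
      qed
    qed (use d in auto)
  qed
qed

lemma perturb:
  fixes xs ys :: "nat \<Rightarrow> real list"
  assumes len: "\<And>n. length (xs n) = length (ys n)" and \<delta>: "\<delta> \<longlonglongrightarrow> 0"
    and close: "\<And>n i. i < length (xs n) \<Longrightarrow> \<bar>xs n ! i - ys n ! i\<bar> \<le> \<delta> n"
    and conv: "conv_to (\<lambda>n. mset (xs n)) \<Phi>"
  shows "conv_to (\<lambda>n. mset (ys n)) \<Phi>"
  unfolding conv_to_def
proof (intro allI impI)
  fix F assume F: "testf F"
  have l1: "(\<lambda>n. dsum F (mset (xs n))) \<longlonglongrightarrow> \<Phi> F" using conv F by (simp add: conv_to_def)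
  have l2: "(\<lambda>n. dsum F (mset (ys n)) - dsum F (mset (xs n))) \<longlonglongrightarrow> 0"
  proof (rule LIMSEQ_I)
    fix e :: real assume e: "e > 0"
    obtain d where d: "d > 0" "\<And>x x'. dist x' x < d \<Longrightarrow> dist (F x') (F x) < e/2"
      using testf_ucont[OF F] e unfolding uniformly_continuous_on_def by (metis half_gt_zero UNIV_I)
    have "eventually (\<lambda>n. norm (\<delta> n) < d) sequentially" using tendstoD[OF \<delta> d(1)] by (simp add: dist_norm)
    then obtain N where N: "\<And>n. n \<ge> N \<Longrightarrow> norm (\<delta> n) < d" by (auto simp: eventually_sequentially)
    show "\<exists>N. \<forall>n\<ge>N. norm (dsum F (mset (ys n)) - dsum F (mset (xs n)) - 0) < e"
    proof (intro exI[of _ N] allI impI)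
      fix n assume "n \<ge> N"
      hence dn: "\<delta> n < d" using N by force
      define m where "m = length (xs n)"
      have "dsum F (mset (ys n)) - dsum F (mset (xs n)) = (\<Sum>i<m. F (of_real (ys n ! i)) - F (of_real (xs n ! i))) / of_nat m"
        unfolding dsum_mset using len[of n]
        by (simp add: sum_list_sum_nth m_def lessThan_atLeast0 sum_subtractf diff_divide_distrib)
      also have "norm \<dots> \<le> (\<Sum>i<m. e/2) / real m"
        unfolding norm_divide norm_of_nat
      proof (rule divide_right_mono[OF order_trans[OF norm_sum sum_mono]])
        fix i assume "i \<in> {..<m}"
        hence "\<bar>xs n ! i - ys n ! i\<bar> < d" using close[of i n] dn by (simp add: m_def)
        hence "dist (complex_of_real (ys n ! i)) (complex_of_real (xs n ! i)) < d"
          by (simp add: dist_norm abs_minus_commute flip: of_real_diff)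
        thus "norm (F (of_real (ys n ! i)) - F (of_real (xs n ! i))) \<le> e/2"
          using d(2) by (simp add: dist_norm less_imp_le)
      qed simp
      also have "\<dots> < e" using e by (cases "m = 0") auto
      finally show "norm (dsum F (mset (ys n)) - dsum F (mset (xs n)) - 0) < e" by simp
    qed
  qed
  have "(\<lambda>n. dsum F (mset (xs n)) + (dsum F (mset (ys n)) - dsum F (mset (xs n)))) \<longlonglongrightarrow> \<Phi> F + 0"
    by (intro tendsto_add l1 l2)
  thus "(\<lambda>n. dsum F (mset (ys n))) \<longlonglongrightarrow> \<Phi> F" by simp
qed

lemma cl_lip: "a \<le> b \<Longrightarrow> \<bar>max a (min b y) - max a (min b x)\<bar> \<le> \<bar>y - x\<bar>"
  for a b x y :: real by (auto simp: max_def min_def)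

lemma envelope:
  fixes h :: "real \<Rightarrow> real"
  assumes ab: "a < b" and hb: "\<And>x. x \<in> {a..b} \<Longrightarrow> \<bar>h x\<bar> \<le> B"
  obtains U where "\<And>x. x \<in> {a..b} \<Longrightarrow> h x \<le> U x" "\<And>x. \<bar>U x\<bar> \<le> B"
    "U \<in> borel_measurable borel"
    "\<And>x. x \<in> {a<..<b} \<Longrightarrow> continuous (at x within {a..b}) h \<Longrightarrow> isCont U x \<and> U x = h x"
proof -
  define S where "S = (\<lambda>x r. Sup (h ` ({a..b} \<inter> ball x r)))"
  define U0 where "U0 = (\<lambda>x. Inf ((\<lambda>r. S x r) ` {0<..}))"
  define cl where "cl = (\<lambda>x::real. max a (min b x))"
  define U where "U = (\<lambda>x. U0 (cl x))"
  have clr: "cl x \<in> {a..b}" for x using ab by (auto simp: cl_def)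
  have clid: "x \<in> {a..b} \<Longrightarrow> cl x = x" for x by (auto simp: cl_def)
  have bddA: "bdd_above (h ` ({a..b} \<inter> ball x r))" for x r
    using hb by (intro bdd_aboveI[of _ B]) (auto simp: abs_le_iff)
  have P1: "h x \<le> S x r" "S x r \<le> B" if "x \<in> {a..b}" "r > 0" for x r
  proof -
    have ne: "h ` ({a..b} \<inter> ball x r) \<noteq> {}" using that by auto
    show "h x \<le> S x r" unfolding S_def by (rule cSup_upper[OF _ bddA]) (use that in auto)
    show "S x r \<le> B" unfolding S_def using hb by (intro cSup_least[OF ne]) (auto simp: abs_le_iff)
  qed
  have bddB: "bdd_below ((\<lambda>r. S x r) ` {0<..})" if "x \<in> {a..b}" for x
    using P1(1)[OF that] by (intro bdd_belowI[of _ "h x"]) auto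
  have P2: "h x \<le> U0 x" if "x \<in> {a..b}" for x
    unfolding U0_def by (rule cINF_greatest) (use P1(1)[OF that] in auto)
  have P3: "U0 x \<le> S x r" if "x \<in> {a..b}" "r > 0" for x r
    unfolding U0_def by (rule cINF_lower[OF bddB[OF that(1)]]) (use that in auto)
  have P4: "\<exists>r>0. S x r < c" if "x \<in> {a..b}" "U0 x < c" for x c
  proof -
    have "Inf ((\<lambda>r. S x r) ` {0<..}) < c" using that unfolding U0_def by simp
    hence "\<exists>y\<in>(\<lambda>r. S x r) ` {0<..}. y < c" by (intro cInf_lessD) auto
    thus ?thesis by auto
  qed
  have P5: "S y r' \<le> S x r" if "y \<in> {a..b}" "r' > 0" "ball y r' \<subseteq> ball x r" for x y r r'
    unfolding S_def by (rule cSup_subset_mono) (use that bddA in auto)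
  have Ub: "\<bar>U x\<bar> \<le> B" for x
  proof -
    have "h (cl x) \<le> U x" "U x \<le> S (cl x) 1" using P2[OF clr] P3[OF clr, of 1] by (auto simp: U_def)
    moreover have "S (cl x) 1 \<le> B" "\<bar>h (cl x)\<bar> \<le> B" using P1(2)[OF clr, of 1] hb[OF clr] by auto
    ultimately show ?thesis by linarith
  qed
  have Ugeh: "h x \<le> U x" if "x \<in> {a..b}" for x using P2[OF that] clid[OF that] by (simp add: U_def)
  have Umeas: "U \<in> borel_measurable borel"
    unfolding borel_measurable_iff_less
  proof
    fix c
    have "open {w. U w < c}"
      unfolding open_dist
    proof (intro ballI)
      fix x assume "x \<in> {w. U w < c}"
      hence "U0 (cl x) < c" by (simp add: U_def)
      then obtain r where r: "r > 0" "S (cl x) r < c" using P4[OF clr] by blast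
      show "\<exists>e>0. \<forall>y. dist y x < e \<longrightarrow> y \<in> {w. U w < c}"
      proof (intro exI[of _ "r/2"] conjI allI impI)
        fix y assume "dist y x < r / 2"
        hence d: "\<bar>cl y - cl x\<bar> < r/2" using cl_lip[of a b y x] ab by (simp add: cl_def dist_real_def)
        have "ball (cl y) (r/2) \<subseteq> ball (cl x) r"
        proof
          fix z assume "z \<in> ball (cl y) (r/2)"
          hence "dist (cl y) z < r/2" by simp
          moreover have "dist (cl x) (cl y) < r/2" using d by (simp add: dist_real_def abs_minus_commute)
          ultimately have "dist (cl x) z < r" using dist_triangle[of "cl x" z "cl y"] by linarith
          thus "z \<in> ball (cl x) r" by simp
        qed
        hence "S (cl y) (r/2) \<le> S (cl x) r" using P5[OF clr] r by simp
        moreover have "U0 (cl y) \<le> S (cl y) (r/2)" using P3[OF clr] r by simp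
        ultimately show "y \<in> {w. U w < c}" using r by (simp add: U_def)
      qed (use r in simp)
    qed
    thus "{w \<in> space borel. U w < c} \<in> sets borel" by simp
  qed
  have Ucont: "isCont U x \<and> U x = h x" if x: "x \<in> {a<..<b}" and hc: "continuous (at x within {a..b}) h" for x
  proof -
    have xab: "x \<in> {a..b}" using x by simp
    have eps: "\<exists>d>0. \<forall>y\<in>{a..b}. dist y x < d \<longrightarrow> dist (h y) (h x) < e" if "e > 0" for e
      using hc that unfolding continuous_within_eps_delta by blast
    have Ux: "U x = h x"
    proof (rule antisym)
      show "h x \<le> U x" by (rule Ugeh[OF xab])
      show "U x \<le> h x"
      proof (rule field_le_epsilon)
        fix e :: real assume "e > 0"
        then obtain d where d: "d > 0" "\<And>y. y \<in> {a..b} \<Longrightarrow> dist y x < d \<Longrightarrow> dist (h y) (h x) < e"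
          using eps by blast
        have "S x d \<le> h x + e" unfolding S_def
        proof (rule cSup_least)
          show "h ` ({a..b} \<inter> ball x d) \<noteq> {}" using xab d by auto
          fix w assume "w \<in> h ` ({a..b} \<inter> ball x d)"
          then obtain y where y: "y \<in> {a..b}" "dist y x < d" "w = h y" by (auto simp: dist_commute)
          hence "dist (h y) (h x) < e" using d(2) by blast
          thus "w \<le> h x + e" using y(3) by (simp add: dist_real_def abs_less_iff)
        qed
        thus "U x \<le> h x + e" using P3[OF xab d(1)] clid[OF xab] by (simp add: U_def)
      qed
    qed
    have "isCont U x"
      unfolding continuous_at_eps_delta
    proof (intro allI impI)
      fix e :: real assume e: "e > 0"
      then obtain d where d: "d > 0" "\<And>y. y \<in> {a..b} \<Longrightarrow> dist y x < d \<Longrightarrow> dist (h y) (h x) < e/2"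
        using eps[of "e/2"] by auto
      define d' where "d' = min (d/2) (min (x - a) (b - x))"
      have d'p: "d' > 0" using d x by (simp add: d'_def)
      show "\<exists>d>0. \<forall>x'. dist x' x < d \<longrightarrow> dist (U x') (U x) < e"
      proof (intro exI[of _ d'] conjI allI impI d'p)
        fix y assume yd: "dist y x < d'"
        hence yab: "y \<in> {a..b}" and yx: "\<bar>y - x\<bar> < d/2"
          by (auto simp: d'_def dist_real_def abs_less_iff)
        have "ball y (d/2) \<subseteq> ball x d"
        proof
          fix z assume "z \<in> ball y (d/2)"
          hence "dist y z < d/2" by simp
          moreover have "dist x y < d/2" using yx by (simp add: dist_real_def abs_minus_commute)
          ultimately have "dist x z < d" using dist_triangle[of x z y] by linarith
          thus "z \<in> ball x d" by simp
        qed
        hence "S y (d/2) \<le> S x d" using P5[OF yab] d by simp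
        moreover have "S x d \<le> h x + e/2" unfolding S_def
        proof (rule cSup_least)
          show "h ` ({a..b} \<inter> ball x d) \<noteq> {}" using xab d by auto
          fix w assume "w \<in> h ` ({a..b} \<inter> ball x d)"
          then obtain y where y: "y \<in> {a..b}" "dist y x < d" "w = h y" by (auto simp: dist_commute)
          hence "dist (h y) (h x) < e/2" using d(2) by blast
          hence "h y - h x < e/2" unfolding dist_real_def by (metis abs_less_iff)
          thus "w \<le> h x + e/2" using y(3) by simp
        qed
        moreover have "U y \<le> S y (d/2)" using P3[OF yab, of "d/2"] d clid[OF yab] by (simp add: U_def)
        moreover have "h y \<le> U y" by (rule Ugeh[OF yab])
        moreover have "\<bar>h y - h x\<bar> < e/2" using d(2)[OF yab] yx d by (simp add: dist_real_def)
        hence "h x - h y < e/2" by (metis abs_less_iff minus_diff_eq)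
        ultimately show "dist (U y) (U x) < e" using Ux e by (simp add: dist_real_def abs_less_iff)
      qed
    qed
    thus ?thesis using Ux by simp
  qed
  show ?thesis by (rule that[OF Ugeh Ub Umeas Ucont])
qed

definition phi :: "real \<Rightarrow> real \<Rightarrow> real \<Rightarrow> real" where
  "phi a b t = max 0 (min 1 ((t - a) / (b - a)))"

lemma phi_cont: "isCont (phi a b) t"
  unfolding phi_def divide_inverse by (intro continuous_intros)

lemma card_le_floor:
  fixes r :: real
  shows "{i \<in> {1..m}. real i \<le> r} = {1..min m (nat \<lfloor>r\<rfloor>)}"
proof -
  have "real i \<le> r \<longleftrightarrow> i \<le> nat \<lfloor>r\<rfloor>" if "i \<ge> 1" for i :: nat
  proof (cases "\<lfloor>r\<rfloor> \<ge> 0")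
    case True
    have "i \<le> nat \<lfloor>r\<rfloor> \<longleftrightarrow> int i \<le> \<lfloor>r\<rfloor>" using True by (simp add: le_nat_iff)
    also have "\<dots> \<longleftrightarrow> of_int (int i) \<le> r" by (rule le_floor_iff)
    finally show ?thesis by simp
  next
    case False
    hence "r < 0" by linarith
    thus ?thesis using that False by auto
  qed
  thus ?thesis by auto
qed

lemma kbound:
  assumes ab: "a < b" and m: "m > 0"
  shows "\<bar>real (card {i \<in> {1..m}. a + real i * (b - a) / real m \<le> s}) / real m - phi a b s\<bar> \<le> 1 / real m"
proof -
  define r where "r = (s - a) * real m / (b - a)"
  have "a + real i * (b - a) / real m \<le> s \<longleftrightarrow> real i \<le> r" for i
  proof -
    have "a + real i * (b - a) / real m \<le> s \<longleftrightarrow> real i * (b - a) / real m \<le> s - a" by linarith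
    also have "\<dots> \<longleftrightarrow> real i * (b - a) \<le> (s - a) * real m" using m by (simp add: pos_divide_le_eq)
    also have "\<dots> \<longleftrightarrow> real i \<le> r" using ab by (simp add: r_def pos_le_divide_eq)
    finally show ?thesis .
  qed
  hence "{i \<in> {1..m}. a + real i * (b - a) / real m \<le> s} = {i \<in> {1..m}. real i \<le> r}" by auto
  hence c: "card {i \<in> {1..m}. a + real i * (b - a) / real m \<le> s} = min m (nat \<lfloor>r\<rfloor>)"
    using card_le_floor by simp
  have p: "phi a b s = max 0 (min 1 (r / real m))"
    using m by (simp add: phi_def r_def)
  have "\<bar>real (min m (nat \<lfloor>r\<rfloor>)) - max 0 (min (real m) r)\<bar> \<le> 1"
  proof (cases "r < 0")
    case True thus ?thesis by simp
  next
    case False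
    define k where "k = nat \<lfloor>r\<rfloor>"
    have "real k = of_int \<lfloor>r\<rfloor>" using False by (simp add: k_def)
    moreover have "of_int \<lfloor>r\<rfloor> \<le> r" "r < of_int \<lfloor>r\<rfloor> + 1" by linarith+
    ultimately have k: "real k \<le> r" "r < real k + 1" by auto
    show ?thesis
    proof (cases "m \<le> k")
      case True
      hence "real m \<le> real k" by simp
      thus ?thesis using True k False by (simp add: k_def[symmetric] min_def max_def)
    next
      case c: False
      hence "real k + 1 \<le> real m" by simp
      thus ?thesis using c k False by (simp add: k_def[symmetric] min_def max_def)
    qed
  qed
  moreover have "max 0 (min 1 (r / real m)) = max 0 (min (real m) r) / real m"
    using m by (auto simp: min_def max_def field_simps)
  ultimately have "\<bar>real (min m (nat \<lfloor>r\<rfloor>)) / real m - phi a b s\<bar> \<le> 1 / real m"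
    using m p by (simp add: diff_divide_distrib[symmetric] abs_divide divide_right_mono)
  thus ?thesis using c by simp
qed

lemma grid_count:
  fixes x :: "nat \<Rightarrow> nat \<Rightarrow> real"
  assumes ab: "a < b" and grid: "asym_unif_grid a b m x"
  shows "(\<lambda>n. real (card {i \<in> {1..m n}. x n i \<le> t}) / real (m n)) \<longlonglongrightarrow> phi a b t"
proof -
  define \<eta> where "\<eta> n = Max ((\<lambda>i. \<bar>x n i - (a + real i * (b - a) / real (m n))\<bar>) ` {1..m n})" for n
  have mt: "filterlim m at_top sequentially" and \<eta>0: "\<eta> \<longlonglongrightarrow> 0" using grid unfolding asym_unif_grid_def \<eta>_def[abs_def] by auto
  have close: "\<bar>x n i - (a + real i * (b - a) / real (m n))\<bar> \<le> \<eta> n" if "i \<in> {1..m n}" for n i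
    unfolding \<eta>_def by (rule Max_ge) (use that in auto)
  define K where "K n s = real (card {i \<in> {1..m n}. a + real i * (b - a) / real (m n) \<le> s})" for n s
  have ev: "eventually (\<lambda>n. m n > 0) sequentially"
  proof -
    have "eventually (\<lambda>n. 1 \<le> m n) sequentially" using mt by (simp add: filterlim_at_top)
    thus ?thesis by (rule eventually_mono) simp
  qed
  have inv0: "(\<lambda>n. 1 / real (m n)) \<longlonglongrightarrow> 0"
    using tendsto_inverse_0_at_top[OF filterlim_compose[OF filterlim_real_sequentially mt]]
    by (simp add: divide_inverse o_def)
  have lo: "(\<lambda>n. phi a b (t - \<eta> n) - 1 / real (m n)) \<longlonglongrightarrow> phi a b t - 0"
    by (intro tendsto_diff inv0 isCont_tendsto_compose[OF phi_cont]) (use tendsto_diff[OF tendsto_const \<eta>0, of t] in simp)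
  have hi: "(\<lambda>n. phi a b (t + \<eta> n) + 1 / real (m n)) \<longlonglongrightarrow> phi a b t + 0"
    by (intro tendsto_add inv0 isCont_tendsto_compose[OF phi_cont]) (use tendsto_add[OF tendsto_const \<eta>0, of t] in simp)
  show ?thesis
  proof (rule tendsto_sandwich[OF _ _ lo[simplified] hi[simplified]])
    show "eventually (\<lambda>n. phi a b (t - \<eta> n) - 1 / real (m n) \<le> real (card {i \<in> {1..m n}. x n i \<le> t}) / real (m n)) sequentially"
      using ev
    proof (rule eventually_mono)
      fix n assume mn: "m n > 0"
      have "{i \<in> {1..m n}. a + real i * (b - a) / real (m n) \<le> t - \<eta> n} \<subseteq> {i \<in> {1..m n}. x n i \<le> t}"
      proof
        fix i assume "i \<in> {i \<in> {1..m n}. a + real i * (b - a) / real (m n) \<le> t - \<eta> n}"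
        hence i: "i \<in> {1..m n}" "a + real i * (b - a) / real (m n) \<le> t - \<eta> n" by auto
        have "x n i - (a + real i * (b - a) / real (m n)) \<le> \<eta> n" using close[OF i(1)] by (simp add: abs_le_iff)
        thus "i \<in> {i \<in> {1..m n}. x n i \<le> t}" using i by simp
      qed
      hence "K n (t - \<eta> n) \<le> real (card {i \<in> {1..m n}. x n i \<le> t})"
        unfolding K_def by (intro of_nat_mono card_mono) auto
      hence "K n (t - \<eta> n) / real (m n) \<le> real (card {i \<in> {1..m n}. x n i \<le> t}) / real (m n)"
        by (simp add: divide_right_mono)
      moreover have "\<bar>K n (t - \<eta> n) / real (m n) - phi a b (t - \<eta> n)\<bar> \<le> 1 / real (m n)"
        unfolding K_def by (rule kbound[OF ab mn])
      ultimately show "phi a b (t - \<eta> n) - 1 / real (m n) \<le> real (card {i \<in> {1..m n}. x n i \<le> t}) / real (m n)"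
        by (simp add: abs_le_iff)
    qed
    show "eventually (\<lambda>n. real (card {i \<in> {1..m n}. x n i \<le> t}) / real (m n) \<le> phi a b (t + \<eta> n) + 1 / real (m n)) sequentially"
      using ev
    proof (rule eventually_mono)
      fix n assume mn: "m n > 0"
      have "{i \<in> {1..m n}. x n i \<le> t} \<subseteq> {i \<in> {1..m n}. a + real i * (b - a) / real (m n) \<le> t + \<eta> n}"
      proof
        fix i assume "i \<in> {i \<in> {1..m n}. x n i \<le> t}"
        hence i: "i \<in> {1..m n}" "x n i \<le> t" by auto
        have "(a + real i * (b - a) / real (m n)) - x n i \<le> \<eta> n" using close[OF i(1)] by (simp add: abs_le_iff)
        thus "i \<in> {i \<in> {1..m n}. a + real i * (b - a) / real (m n) \<le> t + \<eta> n}" using i by simp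
      qed
      hence "real (card {i \<in> {1..m n}. x n i \<le> t}) \<le> K n (t + \<eta> n)"
        unfolding K_def by (intro of_nat_mono card_mono) auto
      hence "real (card {i \<in> {1..m n}. x n i \<le> t}) / real (m n) \<le> K n (t + \<eta> n) / real (m n)"
        by (simp add: divide_right_mono)
      moreover have "\<bar>K n (t + \<eta> n) / real (m n) - phi a b (t + \<eta> n)\<bar> \<le> 1 / real (m n)"
        unfolding K_def by (rule kbound[OF ab mn])
      ultimately show "real (card {i \<in> {1..m n}. x n i \<le> t}) / real (m n) \<le> phi a b (t + \<eta> n) + 1 / real (m n)"
        by (simp add: abs_le_iff)
    qed
  qed
qed

lemma riemann_borel:
  fixes U :: "real \<Rightarrow> real" and x :: "nat \<Rightarrow> nat \<Rightarrow> real" and m :: "nat \<Rightarrow> nat"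
  assumes ab: "a < b" and Um[measurable]: "U \<in> borel_measurable borel" and Ub: "\<And>t. \<bar>U t\<bar> \<le> B"
    and Uc: "AE t in lborel. t \<in> {a<..<b} \<longrightarrow> isCont U t"
    and grid: "asym_unif_grid a b m x" and xin: "\<And>n i. i \<in> {1..m n} \<Longrightarrow> x n i \<in> {a..b}"
  shows "U integrable_on {a..b}"
    and "(\<lambda>n. (\<Sum>i=1..m n. U (x n i)) / real (m n)) \<longlonglongrightarrow> integral {a..b} U / (b - a)"
proof -
  have si: "set_integrable lborel {a..b} U"
    unfolding set_integrable_def
    by (rule integrableI_bounded_set_indicator[where B=B]) (use Ub ab in auto)
  show "U integrable_on {a..b}" using set_borel_integral_eq_integral(1)[OF si] .
  define M where "M = uniform_measure lborel {a..b}"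
  have e1: "1 / ennreal (b - a) = ennreal (1 / (b - a))" using divide_ennreal[of 1 "b - a"] ab by simp
  have Mdens: "M = density lborel (\<lambda>t. ennreal (indicator {a..b} t / (b - a)))"
    unfolding M_def uniform_measure_def using ab e1
    by (intro arg_cong2[where f=density] refl ext)
       (auto simp: emeasure_lborel_Icc divide_ennreal indicator_def)
  have sM: "sets M = sets borel" by (simp add: M_def)
  have spM: "space M = UNIV" using sets_eq_imp_space_eq[OF sM] by simp
  have Mdist: "real_distribution M"
    unfolding real_distribution_def real_distribution_axioms_def
    using sM ab by (auto simp: M_def intro!: prob_space_uniform_measure)
  define \<mu> where "\<mu> n = (if m n = 0 then M else distr (uniform_count_measure {1..m n}) borel (x n))" for n
  have xmeas: "x n \<in> measurable (uniform_count_measure {1..m n}) borel" for n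
    by (subst measurable_cong_sets[OF sets_uniform_count_measure_count_space refl])
       (simp add: measurable_count_space_eq1)
  have \<mu>dist: "real_distribution (\<mu> n)" for n
  proof (cases "m n = 0")
    case True thus ?thesis by (simp add: \<mu>_def Mdist)
  next
    case False
    have "prob_space (uniform_count_measure {1..m n})"
      by (rule prob_space_uniform_count_measure) (use False in auto)
    hence "prob_space (distr (uniform_count_measure {1..m n}) borel (x n))"
      by (rule prob_space.prob_space_distr[OF _ xmeas])
    thus ?thesis unfolding real_distribution_def real_distribution_axioms_def
      using False by (simp add: \<mu>_def)
  qed
  have mt: "filterlim m at_top sequentially" using grid by (simp add: asym_unif_grid_def)
  have ev: "eventually (\<lambda>n. m n > 0) sequentially"
  proof -
    have "eventually (\<lambda>n. 1 \<le> m n) sequentially" using mt by (simp add: filterlim_at_top)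
    thus ?thesis by (rule eventually_mono) simp
  qed
  have cdfM: "cdf M t = phi a b t" for t
  proof -
    have "cdf M t = measure lborel ({a..b} \<inter> {..t}) / measure lborel {a..b}"
      unfolding cdf_def M_def using ab by (simp add: emeasure_lborel_Icc)
    also have "{a..b} \<inter> {..t} = {a..min b t}" by auto
    also have "measure lborel {a..min b t} / measure lborel {a..b} = phi a b t"
      using ab by (auto simp: phi_def min_def max_def field_simps)
    finally show ?thesis .
  qed
  have cdfmu: "cdf (\<mu> n) t = real (card {i \<in> {1..m n}. x n i \<le> t}) / real (m n)" if "m n > 0" for n t
  proof -
    have md: "measure (distr (uniform_count_measure {1..m n}) borel (x n)) {..t} = measure (uniform_count_measure {1..m n}) (x n -` {..t} \<inter> {1..m n})"
      by (subst measure_distr[OF xmeas]) (auto simp: space_uniform_count_measure)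
    have "cdf (\<mu> n) t = measure (uniform_count_measure {1..m n}) (x n -` {..t} \<inter> {1..m n})"
      using md that by (simp add: cdf_def \<mu>_def)
    also have "x n -` {..t} \<inter> {1..m n} = {i \<in> {1..m n}. x n i \<le> t}" by auto
    also have "measure (uniform_count_measure {1..m n}) {i \<in> {1..m n}. x n i \<le> t} = real (card {i \<in> {1..m n}. x n i \<le> t}) / real (m n)"
      by (subst measure_uniform_count_measure) auto
    finally show ?thesis .
  qed
  have wc: "weak_conv_m \<mu> M"
    unfolding weak_conv_m_def weak_conv_def
  proof (intro allI impI)
    fix t
    have "(\<lambda>n. real (card {i \<in> {1..m n}. x n i \<le> t}) / real (m n)) \<longlonglongrightarrow> cdf M t"
      unfolding cdfM by (rule grid_count[OF ab grid])
    thus "(\<lambda>n. cdf (\<mu> n) t) \<longlonglongrightarrow> cdf M t"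
      by (rule Lim_transform_eventually) (use ev cdfmu in \<open>auto elim: eventually_mono\<close>)
  qed
  have disc: "emeasure M {t. \<not> isCont U t} = 0"
  proof (cases "{t. \<not> isCont U t} \<in> sets M")
    case False thus ?thesis by (simp add: emeasure_notin_sets)
  next
    case True
    have "AE t in lborel. 0 < ennreal (indicator {a..b} t / (b - a)) \<longrightarrow> isCont U t"
      using Uc AE_lborel_singleton[of a] AE_lborel_singleton[of b]
      by eventually_elim (auto simp: indicator_def)
    hence "AE t in M. isCont U t" unfolding Mdens by (subst AE_density) auto
    thus ?thesis by (subst (asm) AE_iff_measurable[OF True]) (auto simp: spM)
  qed
  have lim: "(\<lambda>n. integral\<^sup>L (\<mu> n) U) \<longlonglongrightarrow> integral\<^sup>L M U"
    by (rule weak_conv_imp_bdd_ae_continuous_conv[OF \<mu>dist Mdist wc disc _ Um, of B]) (use Ub in simp)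
  have intmu: "integral\<^sup>L (\<mu> n) U = (\<Sum>i=1..m n. U (x n i)) / real (m n)" if "m n > 0" for n
  proof -
    have "integral\<^sup>L (distr (uniform_count_measure {1..m n}) borel (x n)) U = (\<Sum>i=1..m n. U (x n i)) / real (m n)"
      by (subst integral_distr[OF xmeas Um]) (simp add: integral_uniform_count_measure)
    thus ?thesis using that by (simp add: \<mu>_def)
  qed
  have intM: "integral\<^sup>L M U = integral {a..b} U / (b - a)"
  proof -
    have "integral\<^sup>L M U = (LINT t|lborel. (indicator {a..b} t / (b - a)) *\<^sub>R U t)"
      unfolding Mdens by (rule integral_density) (use ab in auto)
    also have "\<dots> = (LINT t|lborel. indicator {a..b} t *\<^sub>R U t) / (b - a)"
      by (simp add: divide_inverse mult.commute mult.left_commute flip: integral_mult_right_zero)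
    also have "(LINT t|lborel. indicator {a..b} t *\<^sub>R U t) = integral {a..b} U"
      using set_borel_integral_eq_integral(2)[OF si] by (simp add: set_lebesgue_integral_def)
    finally show ?thesis .
  qed
  show "(\<lambda>n. (\<Sum>i=1..m n. U (x n i)) / real (m n)) \<longlonglongrightarrow> integral {a..b} U / (b - a)"
    using lim unfolding intM
    by (rule Lim_transform_eventually) (use ev intmu in \<open>auto elim: eventually_mono\<close>)
qed

lemma riemann_real:
  fixes h :: "real \<Rightarrow> real" and x :: "nat \<Rightarrow> nat \<Rightarrow> real" and m :: "nat \<Rightarrow> nat"
  assumes ab: "a < b" and hb: "\<And>t. t \<in> {a..b} \<Longrightarrow> \<bar>h t\<bar> \<le> B"
    and hc: "AE t in lebesgue. t \<in> {a..b} \<longrightarrow> continuous (at t within {a..b}) h"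
    and grid: "asym_unif_grid a b m x" and xin: "\<And>n i. i \<in> {1..m n} \<Longrightarrow> x n i \<in> {a..b}"
  shows "h integrable_on {a..b}"
    and "(\<lambda>n. (\<Sum>i=1..m n. h (x n i)) / real (m n)) \<longlonglongrightarrow> integral {a..b} h / (b - a)"
proof -
  obtain U where U1: "\<And>t. t \<in> {a..b} \<Longrightarrow> h t \<le> U t" and U2: "\<And>t. \<bar>U t\<bar> \<le> B"
    and U3: "U \<in> borel_measurable borel"
    and U4: "\<And>t. t \<in> {a<..<b} \<Longrightarrow> continuous (at t within {a..b}) h \<Longrightarrow> isCont U t \<and> U t = h t"
    using envelope[where h=h and B=B, OF ab hb] by blast
  have hb': "\<And>t. t \<in> {a..b} \<Longrightarrow> \<bar>- h t\<bar> \<le> B" using hb by simp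
  obtain V where V1: "\<And>t. t \<in> {a..b} \<Longrightarrow> - h t \<le> V t" and V2: "\<And>t. \<bar>V t\<bar> \<le> B"
    and V3: "V \<in> borel_measurable borel"
    and V4: "\<And>t. t \<in> {a<..<b} \<Longrightarrow> continuous (at t within {a..b}) (\<lambda>t. - h t) \<Longrightarrow> isCont V t \<and> V t = - h t"
    using envelope[where h="\<lambda>t. - h t" and B=B, OF ab hb'] by blast
  have hcl: "AE t in lborel. t \<in> {a..b} \<longrightarrow> continuous (at t within {a..b}) h"
    using hc by (simp add: AE_completion_iff)
  have Uc: "AE t in lborel. t \<in> {a<..<b} \<longrightarrow> isCont U t"
    using hcl by eventually_elim (use U4 in auto)
  have Vc: "AE t in lborel. t \<in> {a<..<b} \<longrightarrow> isCont V t"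
    using hcl by eventually_elim (use V4 continuous_minus in auto)
  have RU1: "U integrable_on {a..b}"
    using riemann_borel(1)[where x=x and m=m and U=U, OF ab U3 U2 Uc grid] xin by blast
  have RU2: "(\<lambda>n. (\<Sum>i=1..m n. U (x n i)) / real (m n)) \<longlonglongrightarrow> integral {a..b} U / (b - a)"
    using riemann_borel(2)[where x=x and m=m and U=U, OF ab U3 U2 Uc grid] xin by blast
  have RV1: "V integrable_on {a..b}"
    using riemann_borel(1)[where x=x and m=m and U=V, OF ab V3 V2 Vc grid] xin by blast
  have RV2: "(\<lambda>n. (\<Sum>i=1..m n. V (x n i)) / real (m n)) \<longlonglongrightarrow> integral {a..b} V / (b - a)"
    using riemann_borel(2)[where x=x and m=m and U=V, OF ab V3 V2 Vc grid] xin by blast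
  from hc obtain N where N: "{t \<in> space lebesgue. \<not> (t \<in> {a..b} \<longrightarrow> continuous (at t within {a..b}) h)} \<subseteq> N"
    "N \<in> null_sets lebesgue"
    by (auto elim!: AE_E simp: null_setsI)
  have negN: "negligible (N \<union> {a, b})"
    using N(2) by (simp add: negligible_iff_null_sets negligible_insert)
  have good: "U t = h t \<and> V t = - h t" if "t \<in> {a..b} - (N \<union> {a, b})" for t
  proof -
    have "continuous (at t within {a..b}) h" using N(1) that by auto
    moreover have "t \<in> {a<..<b}" using that by auto
    ultimately show ?thesis using U4 V4 continuous_minus by blast
  qed
  define L where "L = (\<lambda>t. - V t)"
  have Lint: "L integrable_on {a..b}" unfolding L_def using RV1 by (rule integrable_neg)
  have intL: "integral {a..b} L = - integral {a..b} V" unfolding L_def by (rule integral_neg)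
  have UL: "integral {a..b} U = integral {a..b} L"
    by (rule integral_spike[OF negN]) (use good in \<open>auto simp: L_def\<close>)
  have Lle: "L t \<le> h t" if "t \<in> {a..b}" for t using V1[OF that] by (simp add: L_def)
  show hint: "h integrable_on {a..b}"
  proof (rule integrable_straddle)
    fix e :: real assume "e > 0"
    show "\<exists>g k i j. (g has_integral i) {a..b} \<and> (k has_integral j) {a..b} \<and> \<bar>i - j\<bar> < e \<and> (\<forall>t\<in>{a..b}. g t \<le> h t \<and> h t \<le> k t)"
      using integrable_integral[OF Lint] integrable_integral[OF RU1] UL Lle U1 \<open>e > 0\<close> by force
  qed
  have ih: "integral {a..b} h = integral {a..b} U"
  proof (rule antisym)
    show "integral {a..b} h \<le> integral {a..b} U" by (rule integral_le[OF hint RU1]) (rule U1)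
    have "integral {a..b} L \<le> integral {a..b} h" by (rule integral_le[OF Lint hint]) (rule Lle)
    thus "integral {a..b} U \<le> integral {a..b} h" using UL by simp
  qed
  have limL: "(\<lambda>n. (\<Sum>i=1..m n. L (x n i)) / real (m n)) \<longlonglongrightarrow> integral {a..b} h / (b - a)"
  proof -
    have "(\<lambda>n. - ((\<Sum>i=1..m n. V (x n i)) / real (m n))) \<longlonglongrightarrow> - (integral {a..b} V / (b - a))"
      by (intro tendsto_minus RV2)
    moreover have "- (integral {a..b} V / (b - a)) = integral {a..b} h / (b - a)"
      using ih UL intL by simp
    ultimately show ?thesis by (simp add: L_def sum_negf)
  qed
  show "(\<lambda>n. (\<Sum>i=1..m n. h (x n i)) / real (m n)) \<longlonglongrightarrow> integral {a..b} h / (b - a)"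
  proof (rule tendsto_sandwich[OF _ _ limL])
    show "eventually (\<lambda>n. (\<Sum>i=1..m n. L (x n i)) / real (m n) \<le> (\<Sum>i=1..m n. h (x n i)) / real (m n)) sequentially"
      by (intro always_eventually allI divide_right_mono sum_mono Lle xin) auto
    show "eventually (\<lambda>n. (\<Sum>i=1..m n. h (x n i)) / real (m n) \<le> (\<Sum>i=1..m n. U (x n i)) / real (m n)) sequentially"
      by (intro always_eventually allI divide_right_mono sum_mono U1 xin) auto
    show "(\<lambda>n. (\<Sum>i=1..m n. U (x n i)) / real (m n)) \<longlonglongrightarrow> integral {a..b} h / (b - a)"
      using RU2 ih by simp
  qed
qed

lemma sum_list_upt1: "sum_list (map f [1..<k+1]) = sum f {1..k}"
  by (induction k) auto

lemma riemann_cplx: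
  fixes h :: "real \<Rightarrow> complex" and x :: "nat \<Rightarrow> nat \<Rightarrow> real" and m :: "nat \<Rightarrow> nat"
  assumes ab: "a < b" and hb: "\<And>t. t \<in> {a..b} \<Longrightarrow> norm (h t) \<le> B"
    and hc: "AE t in lebesgue. t \<in> {a..b} \<longrightarrow> continuous (at t within {a..b}) h"
    and grid: "asym_unif_grid a b m x" and xin: "\<And>n i. i \<in> {1..m n} \<Longrightarrow> x n i \<in> {a..b}"
  shows "h integrable_on {a..b}"
    and "(\<lambda>n. (\<Sum>i=1..m n. h (x n i)) / of_nat (m n)) \<longlonglongrightarrow> integral {a..b} h / of_real (b - a)"
proof -
  have hbR: "\<bar>Re (h t)\<bar> \<le> B" if "t \<in> {a..b}" for t using hb[OF that] abs_Re_le_cmod order_trans by blast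
  have hbI: "\<bar>Im (h t)\<bar> \<le> B" if "t \<in> {a..b}" for t using hb[OF that] abs_Im_le_cmod order_trans by blast
  have hcR: "AE t in lebesgue. t \<in> {a..b} \<longrightarrow> continuous (at t within {a..b}) (\<lambda>t. Re (h t))"
    using hc by eventually_elim (auto intro: continuous_Re)
  have hcI: "AE t in lebesgue. t \<in> {a..b} \<longrightarrow> continuous (at t within {a..b}) (\<lambda>t. Im (h t))"
    using hc by eventually_elim (auto intro: continuous_Im)
  have R1: "(\<lambda>t. Re (h t)) integrable_on {a..b}"
    using riemann_real(1)[where h="\<lambda>t. Re (h t)" and x=x and m=m, OF ab hbR hcR grid] xin by blast
  have R2: "(\<lambda>n. (\<Sum>i=1..m n. Re (h (x n i))) / real (m n)) \<longlonglongrightarrow> integral {a..b} (\<lambda>t. Re (h t)) / (b - a)"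
    using riemann_real(2)[where h="\<lambda>t. Re (h t)" and x=x and m=m, OF ab hbR hcR grid] xin by blast
  have I1: "(\<lambda>t. Im (h t)) integrable_on {a..b}"
    using riemann_real(1)[where h="\<lambda>t. Im (h t)" and x=x and m=m, OF ab hbI hcI grid] xin by blast
  have I2: "(\<lambda>n. (\<Sum>i=1..m n. Im (h (x n i))) / real (m n)) \<longlonglongrightarrow> integral {a..b} (\<lambda>t. Im (h t)) / (b - a)"
    using riemann_real(2)[where h="\<lambda>t. Im (h t)" and x=x and m=m, OF ab hbI hcI grid] xin by blast
  define IR where "IR = integral {a..b} (\<lambda>t. Re (h t))"
  define II where "II = integral {a..b} (\<lambda>t. Im (h t))"
  have "((\<lambda>t. complex_of_real (Re (h t))) has_integral complex_of_real IR) {a..b}"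
    using has_integral_linear[OF integrable_integral[OF R1] bounded_linear_of_real] by (simp add: o_def IR_def)
  moreover have "((\<lambda>t. \<i> * complex_of_real (Im (h t))) has_integral \<i> * complex_of_real II) {a..b}"
    using has_integral_mult_right[OF has_integral_linear[OF integrable_integral[OF I1] bounded_linear_of_real], of \<i>]
    by (simp add: o_def II_def)
  ultimately have "((\<lambda>t. complex_of_real (Re (h t)) + \<i> * complex_of_real (Im (h t))) has_integral
      complex_of_real IR + \<i> * complex_of_real II) {a..b}" by (rule has_integral_add)
  hence hi: "(h has_integral complex_of_real IR + \<i> * complex_of_real II) {a..b}"
    by (simp add: complex_eq[symmetric])
  thus "h integrable_on {a..b}" by blast
  have ih: "integral {a..b} h = complex_of_real IR + \<i> * complex_of_real II" using hi by (rule integral_unique)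
  show "(\<lambda>n. (\<Sum>i=1..m n. h (x n i)) / of_nat (m n)) \<longlonglongrightarrow> integral {a..b} h / of_real (b - a)"
    unfolding tendsto_complex_iff
    using R2 I2 by (simp add: ih IR_def II_def Re_divide_of_real Im_divide_of_real Re_sum Im_sum)
qed

lemma std_grid:
  assumes ab: "a < b"
  shows "asym_unif_grid a b (\<lambda>n. n) (\<lambda>n i. a + real i * (b - a) / real n)"
    and "\<And>n i. i \<in> {1..n} \<Longrightarrow> a + real i * (b - a) / real n \<in> {a..b}"
proof -
  show "asym_unif_grid a b (\<lambda>n. n) (\<lambda>n i. a + real i * (b - a) / real n)"
    unfolding asym_unif_grid_def
  proof
    show "filterlim (\<lambda>n. n) at_top sequentially" by (simp add: filterlim_ident)
    have "eventually (\<lambda>n::nat. 0 = Max ((\<lambda>i::nat. \<bar>a + real i * (b - a) / real n - (a + real i * (b - a) / real n)\<bar>) ` {1..n})) sequentially"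
      using eventually_ge_at_top[of 1] by eventually_elim (auto simp: image_constant_conv)
    thus "(\<lambda>n::nat. Max ((\<lambda>i::nat. \<bar>a + real i * (b - a) / real n - (a + real i * (b - a) / real n)\<bar>) ` {1..n})) \<longlonglongrightarrow> 0"
      by (rule Lim_transform_eventually[OF tendsto_const])
  qed
  fix n i :: nat assume i: "i \<in> {1..n}"
  have np: "real n > 0" using i by auto
  have "real i * (b - a) \<le> real n * (b - a)" using i ab by (intro mult_right_mono) auto
  hence "real i * (b - a) / real n \<le> real n * (b - a) / real n" using np by (intro divide_right_mono) auto
  hence "real i * (b - a) / real n \<le> b - a" using np by simp
  moreover have "0 \<le> real i * (b - a) / real n" using ab by simp
  ultimately show "a + real i * (b - a) / real n \<in> {a..b}" by simp
qed

lemma comp_facts: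
  fixes g :: "real \<Rightarrow> real"
  assumes gc: "AE t in lebesgue. t \<in> {a..b} \<longrightarrow> continuous (at t within {a..b}) g"
    and F: "testf F"
  obtains B where "\<And>t. norm (F (of_real (g t))) \<le> B"
    "AE t in lebesgue. t \<in> {a..b} \<longrightarrow> continuous (at t within {a..b}) (\<lambda>t. F (of_real (g t)))"
proof -
  obtain B where B: "\<And>z. norm (F z) \<le> B" using testf_bounded[OF F] by blast
  have cF: "isCont F z" for z using F by (simp add: testf_def continuous_on_eq_continuous_at)
  have "AE t in lebesgue. t \<in> {a..b} \<longrightarrow> continuous (at t within {a..b}) (\<lambda>t. F (of_real (g t)))"
    using gc by eventually_elim (auto intro!: continuous_within_compose3[OF cF] continuous_of_real)
  thus ?thesis using that B by blast
qed

lemma comp_integrable: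
  fixes g :: "real \<Rightarrow> real"
  assumes ab: "a < b" and gc: "AE t in lebesgue. t \<in> {a..b} \<longrightarrow> continuous (at t within {a..b}) g"
    and F: "testf F"
  shows "(\<lambda>t. F (of_real (g t))) integrable_on {a..b}"
proof -
  obtain B where B: "\<And>t. norm (F (of_real (g t))) \<le> B"
    and c: "AE t in lebesgue. t \<in> {a..b} \<longrightarrow> continuous (at t within {a..b}) (\<lambda>t. F (of_real (g t)))"
    using comp_facts[OF gc F] by blast
  show ?thesis
    using riemann_cplx(1)[OF ab _ c std_grid(1)[OF ab], of B] std_grid(2)[OF ab] B by blast
qed

lemma grid_conv:
  fixes g :: "real \<Rightarrow> real" and x :: "nat \<Rightarrow> nat \<Rightarrow> real" and m :: "nat \<Rightarrow> nat"
  assumes ab: "a < b" and gc: "AE t in lebesgue. t \<in> {a..b} \<longrightarrow> continuous (at t within {a..b}) g"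
    and grid: "asym_unif_grid a b m x" and xin: "\<And>n i. i \<in> {1..m n} \<Longrightarrow> x n i \<in> {a..b}"
  shows "conv_to (\<lambda>n. mset (map (\<lambda>i. g (x n i)) [1..<m n + 1]))
           (\<lambda>F. integral {a..b} (\<lambda>t. F (of_real (g t))) / of_real (b - a))"
  unfolding conv_to_def
proof (intro allI impI)
  fix F assume F: "testf F"
  obtain B where B: "\<And>t. norm (F (of_real (g t))) \<le> B"
    and c: "AE t in lebesgue. t \<in> {a..b} \<longrightarrow> continuous (at t within {a..b}) (\<lambda>t. F (of_real (g t)))"
    using comp_facts[OF gc F] by blast
  have lim: "(\<lambda>n. (\<Sum>i=1..m n. F (of_real (g (x n i)))) / of_nat (m n)) \<longlonglongrightarrow> integral {a..b} (\<lambda>t. F (of_real (g t))) / of_real (b - a)"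
    using riemann_cplx(2)[where h="\<lambda>t. F (of_real (g t))" and x=x and m=m, OF ab _ c grid, of B] xin B by blast
  have "dsum F (mset (map (\<lambda>i. g (x n i)) [1..<m n + 1])) = (\<Sum>i=1..m n. F (of_real (g (x n i)))) / of_nat (m n)" for n
    unfolding dsum_mset map_map o_def sum_list_upt1 by simp
  thus "(\<lambda>n. dsum F (mset (map (\<lambda>i. g (x n i)) [1..<m n + 1]))) \<longlonglongrightarrow> integral {a..b} (\<lambda>t. F (of_real (g t))) / of_real (b - a)"
    using lim by simp
qed

lemma ER_pos:
  fixes g :: "real \<Rightarrow> real"
  assumes ab: "a < b" and gc: "AE t in lebesgue. t \<in> {a..b} \<longrightarrow> continuous (at t within {a..b}) g"
    and ER: "ess_range a b g = {Inf (g ` {a..b}) .. Sup (g ` {a..b})}"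
    and z: "z \<in> {Inf (g ` {a..b}) .. Sup (g ` {a..b})}"
    and G: "testf G" and Gnn: "\<And>t. Re (G (complex_of_real t)) \<ge> 0" and Gz: "Re (G (complex_of_real z)) \<ge> 1"
  shows "Re (integral {a..b} (\<lambda>t. G (complex_of_real (g t)))) > 0"
proof -
  have cG: "isCont G (complex_of_real z)" using G by (simp add: testf_def continuous_on_eq_continuous_at)
  then obtain r where r: "r > 0" "\<And>w. dist w (complex_of_real z) < r \<Longrightarrow> dist (G w) (G (complex_of_real z)) < 1/2"
    unfolding continuous_at_eps_delta by (metis half_gt_zero zero_less_one)
  have hr: "Re (G (complex_of_real t)) > 1/2" if "\<bar>t - z\<bar> < r" for t
  proof -
    have "dist (complex_of_real t) (complex_of_real z) < r" using that by (simp add: dist_norm flip: of_real_diff)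
    hence "cmod (G (complex_of_real t) - G (complex_of_real z)) < 1/2" using r(2) by (simp add: dist_norm)
    moreover have "\<bar>Re (G (complex_of_real t) - G (complex_of_real z))\<bar> \<le> cmod (G (complex_of_real t) - G (complex_of_real z))"
      by (rule abs_Re_le_cmod)
    ultimately show ?thesis using Gz by (simp add: abs_less_iff)
  qed
  define E where "E = {x \<in> {a..b}. \<bar>g x - z\<bar> < r}"
  have Epos: "emeasure lebesgue E > 0" using z ER r(1) unfolding ess_range_def E_def by blast
  have Es: "E \<in> sets lebesgue" using Epos emeasure_notin_sets by fastforce
  have Ef: "E \<in> lmeasurable" by (rule fmeasurableI2[OF lmeasurable_interval(1) _ Es]) (auto simp: E_def)
  have mE: "measure lebesgue E > 0" using Epos emeasure_eq_measure2[OF Ef] by (simp add: ennreal_less_zero_iff)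
  have Eint: "indicat_real E integrable_on {a..b}"
  proof -
    have "(indicat_real E has_integral measure lebesgue E) UNIV" using Ef by (simp only: lmeasurable_iff_has_integral[symmetric])
    hence "indicat_real E integrable_on UNIV" by (rule has_integral_integrable)
    thus ?thesis by (rule integrable_on_subinterval) simp
  qed
  have iE: "integral {a..b} (indicat_real E) = measure lebesgue E"
  proof -
    have "E \<inter> {a..b} = E" by (auto simp: E_def)
    thus ?thesis using integral_indicator[of E "{a..b}"] Ef by simp
  qed
  have Gint: "(\<lambda>t. G (complex_of_real (g t))) integrable_on {a..b}" by (rule comp_integrable[OF ab gc G])
  have ReI: "((\<lambda>t. Re (G (complex_of_real (g t)))) has_integral Re (integral {a..b} (\<lambda>t. G (complex_of_real (g t))))) {a..b}"
    using has_integral_linear[OF integrable_integral[OF Gint] bounded_linear_Re] by (simp add: o_def)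
  have "integral {a..b} (\<lambda>t. (1/2) * indicat_real E t) \<le> integral {a..b} (\<lambda>t. Re (G (complex_of_real (g t))))"
  proof (rule integral_le)
    show "(\<lambda>t. (1/2) * indicat_real E t) integrable_on {a..b}" using integrable_on_cmult_left[OF Eint, of "1/2"] by simp
    show "(\<lambda>t. Re (G (complex_of_real (g t)))) integrable_on {a..b}" using ReI by blast
    fix t assume "t \<in> {a..b}"
    show "(1/2) * indicat_real E t \<le> Re (G (complex_of_real (g t)))"
    proof (cases "t \<in> E")
      case True thus ?thesis using hr[of "g t"] by (auto simp: E_def)
    next
      case False thus ?thesis using Gnn by simp
    qed
  qed
  moreover have "integral {a..b} (\<lambda>t. (1/2) * indicat_real E t) = (1/2) * measure lebesgue E"
    using iE by simp
  moreover have "integral {a..b} (\<lambda>t. Re (G (complex_of_real (g t)))) = Re (integral {a..b} (\<lambda>t. G (complex_of_real (g t))))"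
    using ReI by (rule integral_unique)
  ultimately show ?thesis using mE by linarith
qed

lemma mset_filter_tags:
  assumes "finite J" "\<And>z. z \<in> set zs \<Longrightarrow> tag z \<in> J"
  shows "(\<Sum>j\<in>J. mset (map g (filter (\<lambda>z. tag z = j) zs))) = mset (map g zs)"
  using assms(2)
proof (induction zs)
  case Nil thus ?case by simp
next
  case (Cons z zs)
  have "(\<Sum>j\<in>J. mset (map g (filter (\<lambda>z. tag z = j) (z # zs))))
      = (\<Sum>j\<in>J. (if tag z = j then {#g z#} else {#}) + mset (map g (filter (\<lambda>z. tag z = j) zs)))"
    by (intro sum.cong) auto
  also have "\<dots> = (\<Sum>j\<in>J. (if tag z = j then {#g z#} else {#})) + (\<Sum>j\<in>J. mset (map g (filter (\<lambda>z. tag z = j) zs)))"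
    by (rule sum.distrib)
  also have "(\<Sum>j\<in>J. (if tag z = j then {#g z#} else {#})) = {#g z#}"
    using Cons.prems assms(1) by (simp add: sum.delta)
  also have "(\<Sum>j\<in>J. mset (map g (filter (\<lambda>z. tag z = j) zs))) = mset (map g zs)"
    using Cons by simp
  finally show ?case by simp
qed

lemma filter_mset_sum: "filter_mset P (sum M J) = (\<Sum>j\<in>J. filter_mset P (M j))"
  by (induction J rule: infinite_finite_induct) auto

lemma image_mset_sum': "image_mset g (sum M J) = (\<Sum>j\<in>J. image_mset g (M j))"
  by (induction J rule: infinite_finite_induct) auto

lemma sum_mset_sum': "sum_mset (sum M J) = (\<Sum>j\<in>J. sum_mset (M j))"
  by (induction J rule: infinite_finite_induct) auto

lemma perm_mset:
  assumes "\<sigma> permutes {1..m}"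
  shows "mset (map (\<lambda>i. g (\<sigma> i)) [1..<m+1]) = mset (map g [1..<m+1])"
proof -
  have inj: "inj_on \<sigma> {1..<m+1}" using assms permutes_inj_on by (metis atLeastLessThanSuc_atLeastAtMost Suc_eq_plus1)
  have img: "\<sigma> ` {1..<m+1} = {1..<m+1}" using assms permutes_image by (metis atLeastLessThanSuc_atLeastAtMost Suc_eq_plus1)
  have c: "(\<lambda>i. g (\<sigma> i)) = g \<circ> \<sigma>" by auto
  have "mset (map (\<lambda>i. g (\<sigma> i)) [1..<m+1]) = image_mset g (image_mset \<sigma> (mset_set {1..<m+1}))"
    by (simp only: mset_map mset_upt image_mset.compositionality c)
  also have "image_mset \<sigma> (mset_set {1..<m+1}) = mset_set {1..<m+1}"
    using image_mset_mset_set[OF inj] img by simp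
  finally show ?thesis by (simp only: mset_map mset_upt)
qed

lemma exists_sort_perm:
  fixes g :: "nat \<Rightarrow> real"
  shows "\<exists>\<sigma>. \<sigma> permutes {1..m} \<and> sorted (map (\<lambda>i. g (\<sigma> i)) [1..<m+1])"
proof -
  define ixs where "ixs = sort_key g [1..<m+1]"
  have mis: "mset ixs = mset [1..<m+1]" by (simp add: ixs_def)
  have dis: "distinct ixs" using mis by (metis distinct_upt mset_eq_imp_distinct_iff)
  have lis: "length ixs = m" using mis by (metis length_upt add_diff_cancel_left' size_mset add.commute)
  have sis: "set ixs = {1..m}" using mis by (metis atLeastLessThanSuc_atLeastAtMost Suc_eq_plus1 set_mset_mset set_upt)
  define \<sigma> where "\<sigma> i = (if i \<in> {1..m} then ixs ! (i - 1) else i)" for i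
  have b1: "bij_betw (\<lambda>i. i - 1) {1..m} {..<m}"
    by (rule bij_betw_byWitness[where f'="\<lambda>i. i + 1"]) auto
  have b2: "bij_betw ((!) ixs) {..<m} {1..m}" using bij_betw_nth[OF dis] lis sis by simp
  have "bij_betw ((!) ixs \<circ> (\<lambda>i. i - 1)) {1..m} {1..m}" by (rule bij_betw_trans[OF b1 b2])
  hence "bij_betw \<sigma> {1..m} {1..m}" by (rule bij_betw_cong[THEN iffD1, rotated]) (simp add: \<sigma>_def)
  hence perm: "\<sigma> permutes {1..m}" by (rule bij_imp_permutes) (auto simp: \<sigma>_def)
  have "map (\<lambda>i. g (\<sigma> i)) [1..<m+1] = map g ixs"
    by (rule nth_equalityI) (auto simp: lis \<sigma>_def nth_upt simp del: upt_Suc)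
  moreover have "sorted (map g ixs)" unfolding ixs_def by (rule sorted_sort_key)
  ultimately show ?thesis using perm by auto
qed

lemma gen_grid:
  assumes ab: "a < b" and mt: "filterlim m at_top sequentially"
  shows "asym_unif_grid a b m (\<lambda>n i. a + real i * (b - a) / real (m n))"
    and "\<And>n i. i \<in> {1..m n} \<Longrightarrow> a + real i * (b - a) / real (m n) \<in> {a..b}"
proof -
  show "asym_unif_grid a b m (\<lambda>n i. a + real i * (b - a) / real (m n))"
    unfolding asym_unif_grid_def
  proof
    show "filterlim m at_top sequentially" by fact
    have "eventually (\<lambda>n. 1 \<le> m n) sequentially" using mt by (simp add: filterlim_at_top)
    hence "eventually (\<lambda>n::nat. 0 = Max ((\<lambda>i::nat. \<bar>a + real i * (b - a) / real (m n) - (a + real i * (b - a) / real (m n))\<bar>) ` {1..m n})) sequentially"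
      by eventually_elim (auto simp: image_constant_conv)
    thus "(\<lambda>n::nat. Max ((\<lambda>i::nat. \<bar>a + real i * (b - a) / real (m n) - (a + real i * (b - a) / real (m n))\<bar>) ` {1..m n})) \<longlonglongrightarrow> 0"
      by (rule Lim_transform_eventually[OF tendsto_const])
  qed
  fix n i :: nat assume i: "i \<in> {1..m n}"
  thus "a + real i * (b - a) / real (m n) \<in> {a..b}" using std_grid(2)[OF ab, of i "m n"] by simp
qed

lemma ER_nonneg:
  fixes g :: "real \<Rightarrow> real"
  assumes ab: "a < b" and gc: "AE t in lebesgue. t \<in> {a..b} \<longrightarrow> continuous (at t within {a..b}) g"
    and G: "testf G" and Gnn: "\<And>t. Re (G (complex_of_real t)) \<ge> 0"
  shows "Re (integral {a..b} (\<lambda>t. G (complex_of_real (g t)))) \<ge> 0"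
proof -
  have Gint: "(\<lambda>t. G (complex_of_real (g t))) integrable_on {a..b}" by (rule comp_integrable[OF ab gc G])
  have ReI: "((\<lambda>t. Re (G (complex_of_real (g t)))) has_integral Re (integral {a..b} (\<lambda>t. G (complex_of_real (g t))))) {a..b}"
    using has_integral_linear[OF integrable_integral[OF Gint] bounded_linear_Re] by (simp add: o_def)
  show ?thesis by (rule has_integral_nonneg[OF ReI]) (use Gnn in auto)
qed

lemma dsum_sum:
  assumes fin: "finite J" and d: "(\<Sum>j\<in>J. size (G j)) > 0"
  shows "dsum F (\<Sum>j\<in>J. G j) = (\<Sum>j\<in>J. complex_of_real (real (size (G j)) / real (\<Sum>j\<in>J. size (G j))) * dsum F (G j))"
proof -
  define d where "d = (\<Sum>j\<in>J. size (G j))"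
  have "dsum F (\<Sum>j\<in>J. G j) = (\<Sum>j\<in>J. \<Sum>\<^sub># (image_mset (\<lambda>l. F (complex_of_real l)) (G j))) / of_nat d"
    unfolding dsum_def d_def by (simp add: image_mset_sum' sum_mset_sum' size_multiset_sum)
  also have "\<dots> = (\<Sum>j\<in>J. \<Sum>\<^sub># (image_mset (\<lambda>l. F (complex_of_real l)) (G j)) / of_nat d)"
    by (simp add: sum_divide_distrib)
  also have "\<dots> = (\<Sum>j\<in>J. complex_of_real (real (size (G j)) / real d) * dsum F (G j))"
  proof (intro sum.cong refl)
    fix j assume "j \<in> J"
    show "\<Sum>\<^sub># (image_mset (\<lambda>l. F (complex_of_real l)) (G j)) / of_nat d = complex_of_real (real (size (G j)) / real d) * dsum F (G j)"
    proof (cases "size (G j) = 0")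
      case True thus ?thesis by (simp add: dsum_def)
    next
      case False thus ?thesis by (simp add: dsum_def field_simps)
    qed
  qed
  finally show ?thesis by (simp add: d_def)
qed

lemma nth_upt1: "i \<in> {1..m} \<Longrightarrow> map h [1..<m+1] ! (i - 1) = h i"
  by (auto simp: nth_upt simp del: upt_Suc)

lemma d_general:
  fixes g :: "real \<Rightarrow> real" and Pj :: "nat \<Rightarrow> real multiset" and x :: "nat \<Rightarrow> nat \<Rightarrow> real"
    and lam :: "nat \<Rightarrow> nat \<Rightarrow> real" and \<delta> :: "nat \<Rightarrow> real"
  assumes ab: "a < b" and gc: "AE t in lebesgue. t \<in> {a..b} \<longrightarrow> continuous (at t within {a..b}) g"
    and ER: "ess_range a b g = {Inf (g ` {a..b}) .. Sup (g ` {a..b})}"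
    and gbdd: "bounded (g ` {a..b})"
    and cP: "conv_to Pj (\<lambda>F. integral {a..b} (\<lambda>t. F (of_real (g t))) / of_real (b - a))"
    and \<delta>0: "\<delta> \<longlonglongrightarrow> 0"
    and setPj: "\<And>n t. t \<in># Pj n \<Longrightarrow> t \<in> {Inf (g ` {a..b}) - \<delta> n .. Sup (g ` {a..b}) + \<delta> n}"
    and grid: "asym_unif_grid a b (\<lambda>n. size (Pj n)) x"
    and xin: "\<forall>n. \<forall>i\<in>{1..size (Pj n)}. x n i \<in> {a..b}"
    and lamP: "\<forall>n. mset (map (lam n) [1..<size (Pj n) + 1]) = Pj n"
  shows "(\<forall>\<sigma> \<tau> :: nat \<Rightarrow> nat \<Rightarrow> nat.
              (\<forall>n. \<sigma> n permutes {1..size (Pj n)} \<and> \<tau> n permutes {1..size (Pj n)} \<and>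
                   sorted (map (\<lambda>i. g (x n (\<sigma> n i))) [1..<size (Pj n) + 1]) \<and>
                   sorted (map (\<lambda>i. lam n (\<tau> n i)) [1..<size (Pj n) + 1])) \<longrightarrow>
              (\<lambda>n. Max ((\<lambda>i. \<bar>g (x n (\<sigma> n i)) - lam n (\<tau> n i)\<bar>) ` {1..size (Pj n)}))
                \<longlonglongrightarrow> 0) \<and>
           (\<lambda>n. Min ((\<lambda>\<tau>. Max ((\<lambda>i. \<bar>g (x n i) - lam n (\<tau> i)\<bar>) ` {1..size (Pj n)}))
                       ` {\<tau>. \<tau> permutes {1..size (Pj n)}})) \<longlonglongrightarrow> 0"
proof -
  define m where "m n = size (Pj n)" for n
  define \<alpha> where "\<alpha> = Inf (g ` {a..b})"
  define \<beta> where "\<beta> = Sup (g ` {a..b})"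
  define \<Phi> :: "(complex \<Rightarrow> complex) \<Rightarrow> complex" where "\<Phi> = (\<lambda>F. integral {a..b} (\<lambda>t. F (complex_of_real (g t))) / complex_of_real (b - a))"
  have gab: "t \<in> {a..b} \<Longrightarrow> g t \<in> {\<alpha>..\<beta>}" for t
    unfolding \<alpha>_def \<beta>_def using gbdd
    by (auto intro!: cInf_lower cSup_upper bounded_imp_bdd_below bounded_imp_bdd_above)
  define Mg where "Mg = \<bar>\<alpha>\<bar> + \<bar>\<beta>\<bar>"
  have mt: "filterlim m at_top sequentially" using grid by (simp add: asym_unif_grid_def m_def[abs_def])
  have ev1: "eventually (\<lambda>n. 1 \<le> m n) sequentially" using mt by (simp add: filterlim_at_top)
  have xin': "\<And>n i. i \<in> {1..m n} \<Longrightarrow> x n i \<in> {a..b}" using xin by (simp add: m_def)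
  have grid': "asym_unif_grid a b m x" using grid by (simp add: m_def[abs_def])
  have cgrid: "conv_to (\<lambda>n. mset (map (\<lambda>i. g (x n i)) [1..<m n + 1])) \<Phi>"
    unfolding \<Phi>_def by (rule grid_conv[OF ab gc grid' xin'])
  have ev\<delta>: "c > 0 \<Longrightarrow> eventually (\<lambda>n. \<delta> n < c) sequentially" for c
    using \<delta>0 by (rule order_tendstoD(2))
  have part1: "(\<lambda>n. Max ((\<lambda>i. \<bar>g (x n (\<sigma> n i)) - lam n (\<tau> n i)\<bar>) ` {1..m n})) \<longlonglongrightarrow> 0"
    if H: "\<forall>n. \<sigma> n permutes {1..m n} \<and> \<tau> n permutes {1..m n} \<and>
                   sorted (map (\<lambda>i. g (x n (\<sigma> n i))) [1..<m n + 1]) \<and>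
                   sorted (map (\<lambda>i. lam n (\<tau> n i)) [1..<m n + 1])" for \<sigma> \<tau>
  proof -
    have H\<sigma>: "\<sigma> n permutes {1..m n}" for n using H by simp
    have H\<tau>: "\<tau> n permutes {1..m n}" for n using H by simp
    define A where "A n = map (\<lambda>i. g (x n (\<sigma> n i))) [1..<m n + 1]" for n
    define Bq where "Bq n = map (\<lambda>i. lam n (\<tau> n i)) [1..<m n + 1]" for n
    have eqA: "mset (A n) = mset (map (\<lambda>i. g (x n i)) [1..<m n + 1])" for n
      unfolding A_def using perm_mset[OF H\<sigma>[of n], of "\<lambda>i. g (x n i)"] by simp
    have eqB: "mset (Bq n) = Pj n" for n
      unfolding Bq_def using perm_mset[OF H\<tau>[of n], of "lam n"] lamP by (simp add: m_def)
    have cA: "conv_to (\<lambda>n. mset (A n)) \<Phi>" using cgrid by (simp add: eqA)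
    have cB: "conv_to (\<lambda>n. mset (Bq n)) \<Phi>" using cP by (simp add: eqB \<Phi>_def)
    have lenAB: "length (A n) = length (Bq n)" for n by (simp add: A_def Bq_def)
    have lenA: "length (A n) = m n" for n by (simp add: A_def)
    have setA: "t \<in> set (A n) \<Longrightarrow> t \<in> {\<alpha>..\<beta>}" for n t
    proof -
      assume "t \<in> set (A n)"
      then obtain i where i0: "i \<in> set [1..<m n + 1]" "t = g (x n (\<sigma> n i))"
        unfolding A_def by (auto simp del: upt_Suc)
      have i: "i \<in> {1..m n}" "t = g (x n (\<sigma> n i))" using i0 by auto
      have "\<sigma> n i \<in> {1..m n}" using permutes_in_image[OF H\<sigma>[of n]] i(1) by blast
      thus ?thesis using gab xin' i(2) by blast
    qed
    have setB: "t \<in> set (Bq n) \<Longrightarrow> t \<in> {\<alpha> - \<delta> n..\<beta> + \<delta> n}" for n t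
    proof -
      assume "t \<in> set (Bq n)"
      hence "t \<in># Pj n" using eqB[of n] by (metis set_mset_mset)
      thus ?thesis using setPj \<alpha>_def \<beta>_def by blast
    qed
    have gap: "gapcond \<Phi> A Bq"
      unfolding gapcond_def
    proof (intro allI impI)
      fix u v :: real assume uv: "u < v"
      show "(\<forall>G. testf G \<and> (\<forall>t. Re (G (complex_of_real t)) \<ge> 0) \<and> (\<forall>t\<in>{u..v}. Re (G (complex_of_real t)) \<ge> 1) \<longrightarrow> Re (\<Phi> G) > 0)
         \<or> eventually (\<lambda>n. length (filter (\<lambda>t. t \<le> (u+v)/2) (A n)) = length (filter (\<lambda>t. t \<le> (u+v)/2) (Bq n))) sequentially"
      proof (cases "\<exists>z\<in>{u..v}. z \<in> {\<alpha>..\<beta>}")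
        case True
        then obtain z where z: "z \<in> {u..v}" "z \<in> {\<alpha>..\<beta>}" by blast
        have "Re (\<Phi> G) > 0" if G: "testf G" and Gnn: "\<forall>t. Re (G (complex_of_real t)) \<ge> 0"
          and G1: "\<forall>t\<in>{u..v}. Re (G (complex_of_real t)) \<ge> 1" for G
        proof -
          have "Re (integral {a..b} (\<lambda>t. G (complex_of_real (g t)))) > 0"
            by (rule ER_pos[OF ab gc ER _ G]) (use z G1 Gnn in \<open>auto simp: \<alpha>_def \<beta>_def\<close>)
          thus ?thesis using ab by (simp add: \<Phi>_def Re_divide_of_real)
        qed
        thus ?thesis by blast
      next
        case False
        have ab': "\<alpha> \<le> \<beta>" using gab[of a] ab by auto
        have out: "\<beta> < u \<or> v < \<alpha>"
        proof (rule ccontr)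
          assume "\<not> (\<beta> < u \<or> v < \<alpha>)"
          hence "max u \<alpha> \<in> {u..v}" "max u \<alpha> \<in> {\<alpha>..\<beta>}" using uv ab' by auto
          thus False using False by blast
        qed
        have "eventually (\<lambda>n. \<delta> n < (v - u) / 2) sequentially" using uv by (intro ev\<delta>) simp
        hence "eventually (\<lambda>n. length (filter (\<lambda>t. t \<le> (u+v)/2) (A n)) = length (filter (\<lambda>t. t \<le> (u+v)/2) (Bq n))) sequentially"
        proof (rule eventually_mono)
          fix n assume e: "\<delta> n < (v - u) / 2"
          show "length (filter (\<lambda>t. t \<le> (u+v)/2) (A n)) = length (filter (\<lambda>t. t \<le> (u+v)/2) (Bq n))"
          proof (cases "\<beta> < u")
            case True
            have "filter (\<lambda>t. t \<le> (u+v)/2) (A n) = A n"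
              by (rule filter_True) (use setA True uv in fastforce)
            moreover have "filter (\<lambda>t. t \<le> (u+v)/2) (Bq n) = Bq n"
              by (rule filter_True) (use setB True uv e in fastforce)
            ultimately show ?thesis using lenAB by simp
          next
            case False
            hence vl: "v < \<alpha>" using out by simp
            have "filter (\<lambda>t. t \<le> (u+v)/2) (A n) = []"
              by (rule filter_False) (use setA vl uv in fastforce)
            moreover have "filter (\<lambda>t. t \<le> (u+v)/2) (Bq n) = []"
              by (rule filter_False) (use setB vl uv e in fastforce)
            ultimately show ?thesis by simp
          qed
        qed
        thus ?thesis by blast
      qed
    qed
    have bnd: "eventually (\<lambda>n. set (A n) \<union> set (Bq n) \<subseteq> {- Mg - 1 .. Mg + 1}) sequentially"
      using ev\<delta>[of 1, OF zero_less_one]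
    proof (rule eventually_mono)
      fix n assume e: "\<delta> n < 1"
      show "set (A n) \<union> set (Bq n) \<subseteq> {- Mg - 1 .. Mg + 1}"
      proof
        fix t assume "t \<in> set (A n) \<union> set (Bq n)"
        hence "t \<in> {\<alpha> - 1 .. \<beta> + 1}" using setA[of t n] setB[of t n] e by auto
        thus "t \<in> {- Mg - 1 .. Mg + 1}" by (auto simp: Mg_def abs_le_iff)
      qed
    qed
    have sA: "sorted (A n)" for n using H by (simp add: A_def)
    have sB: "sorted (Bq n)" for n using H by (simp add: Bq_def)
    have SM: "\<And>e. e > 0 \<Longrightarrow> eventually (\<lambda>n. \<forall>i<length (A n). \<bar>A n ! i - Bq n ! i\<bar> < e) sequentially"
      by (rule sort_match[OF lenAB sA sB cA cB gap bnd])
    show ?thesis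
    proof (rule LIMSEQ_I)
      fix e :: real assume e: "e > 0"
      from eventually_conj[OF SM[OF e] ev1] obtain N where
        N: "\<And>n. n \<ge> N \<Longrightarrow> (\<forall>i<length (A n). \<bar>A n ! i - Bq n ! i\<bar> < e) \<and> 1 \<le> m n"
        by (auto simp: eventually_sequentially)
      show "\<exists>N. \<forall>n\<ge>N. norm (Max ((\<lambda>i. \<bar>g (x n (\<sigma> n i)) - lam n (\<tau> n i)\<bar>) ` {1..m n}) - 0) < e"
      proof (intro exI allI impI)
        fix n assume "n \<ge> N"
        hence Nn: "\<forall>i<length (A n). \<bar>A n ! i - Bq n ! i\<bar> < e" "1 \<le> m n" using N by auto
        have el: "\<bar>g (x n (\<sigma> n i)) - lam n (\<tau> n i)\<bar> < e" if i: "i \<in> {1..m n}" for i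
        proof -
          have "i - 1 < length (A n)" using i lenA by auto
          hence "\<bar>A n ! (i - 1) - Bq n ! (i - 1)\<bar> < e" using Nn by blast
          moreover have "A n ! (i - 1) = g (x n (\<sigma> n i))" unfolding A_def by (rule nth_upt1[OF i])
          moreover have "Bq n ! (i - 1) = lam n (\<tau> n i)" unfolding Bq_def by (rule nth_upt1[OF i])
          ultimately show ?thesis by simp
        qed
        have ne: "(\<lambda>i. \<bar>g (x n (\<sigma> n i)) - lam n (\<tau> n i)\<bar>) ` {1..m n} \<noteq> {}" using Nn(2) by auto
        have lt: "Max ((\<lambda>i. \<bar>g (x n (\<sigma> n i)) - lam n (\<tau> n i)\<bar>) ` {1..m n}) < e"
          using el ne by (subst Max_less_iff) auto
        have ge: "Max ((\<lambda>i. \<bar>g (x n (\<sigma> n i)) - lam n (\<tau> n i)\<bar>) ` {1..m n}) \<ge> 0"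
          using Nn(2) by (intro order_trans[OF _ Max_ge[of _ "\<bar>g (x n (\<sigma> n 1)) - lam n (\<tau> n 1)\<bar>"]]) auto
        show "norm (Max ((\<lambda>i. \<bar>g (x n (\<sigma> n i)) - lam n (\<tau> n i)\<bar>) ` {1..m n}) - 0) < e"
          using lt ge by simp
      qed
    qed
  qed
  have P1: "\<forall>\<sigma> \<tau> :: nat \<Rightarrow> nat \<Rightarrow> nat.
              (\<forall>n. \<sigma> n permutes {1..size (Pj n)} \<and> \<tau> n permutes {1..size (Pj n)} \<and>
                   sorted (map (\<lambda>i. g (x n (\<sigma> n i))) [1..<size (Pj n) + 1]) \<and>
                   sorted (map (\<lambda>i. lam n (\<tau> n i)) [1..<size (Pj n) + 1])) \<longrightarrow>
              (\<lambda>n. Max ((\<lambda>i. \<bar>g (x n (\<sigma> n i)) - lam n (\<tau> n i)\<bar>) ` {1..size (Pj n)}))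
                \<longlonglongrightarrow> 0"
    using part1 by (simp add: m_def)
  have "\<forall>n. \<exists>\<sigma>. \<sigma> permutes {1..m n} \<and> sorted (map (\<lambda>i. g (x n (\<sigma> i))) [1..<m n + 1])"
    by (intro allI exists_sort_perm)
  then obtain \<sigma>0 where \<sigma>0: "\<And>n. \<sigma>0 n permutes {1..m n} \<and> sorted (map (\<lambda>i. g (x n (\<sigma>0 n i))) [1..<m n + 1])"
    by metis
  have "\<forall>n. \<exists>\<tau>. \<tau> permutes {1..m n} \<and> sorted (map (\<lambda>i. lam n (\<tau> i)) [1..<m n + 1])"
    by (intro allI exists_sort_perm)
  then obtain \<tau>0 where \<tau>0: "\<And>n. \<tau>0 n permutes {1..m n} \<and> sorted (map (\<lambda>i. lam n (\<tau>0 n i)) [1..<m n + 1])"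
    by metis
  define Mx where "Mx n = Max ((\<lambda>i. \<bar>g (x n (\<sigma>0 n i)) - lam n (\<tau>0 n i)\<bar>) ` {1..m n})" for n
  have Mx0: "Mx \<longlonglongrightarrow> 0" unfolding Mx_def by (rule part1) (use \<sigma>0 \<tau>0 in blast)
  define Mn where "Mn n = Min ((\<lambda>\<tau>. Max ((\<lambda>i. \<bar>g (x n i) - lam n (\<tau> i)\<bar>) ` {1..m n})) ` {\<tau>. \<tau> permutes {1..m n}})" for n
  have bounds: "0 \<le> Mn n \<and> Mn n \<le> Mx n" if n1: "1 \<le> m n" for n
  proof -
    define S where "S = {1..m n}"
    have fin: "finite {\<tau>. \<tau> permutes S}" by (simp add: S_def finite_permutations)
    have Mge: "Max ((\<lambda>i. \<bar>g (x n i) - lam n (\<tau> i)\<bar>) ` S) \<ge> 0" for \<tau>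
      using n1 by (intro order_trans[OF _ Max_ge[of _ "\<bar>g (x n 1) - lam n (\<tau> 1)\<bar>"]]) (auto simp: S_def)
    have p\<sigma>: "\<sigma>0 n permutes S" and p\<tau>: "\<tau>0 n permutes S" using \<sigma>0 \<tau>0 by (auto simp: S_def)
    define \<tau>' where "\<tau>' = \<tau>0 n \<circ> inv (\<sigma>0 n)"
    have p': "\<tau>' permutes S" unfolding \<tau>'_def by (intro permutes_compose permutes_inv p\<sigma> p\<tau>)
    have img: "(\<lambda>i. \<bar>g (x n i) - lam n (\<tau>' i)\<bar>) ` S = (\<lambda>i. \<bar>g (x n (\<sigma>0 n i)) - lam n (\<tau>0 n i)\<bar>) ` S"
    proof -
      have "(\<lambda>i. \<bar>g (x n i) - lam n (\<tau>' i)\<bar>) ` S = (\<lambda>i. \<bar>g (x n i) - lam n (\<tau>' i)\<bar>) ` (\<sigma>0 n ` S)"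
        using permutes_image[OF p\<sigma>] by simp
      also have "\<dots> = (\<lambda>i. \<bar>g (x n (\<sigma>0 n i)) - lam n (\<tau>0 n i)\<bar>) ` S"
        unfolding image_image \<tau>'_def using permutes_inverses(2)[OF p\<sigma>] by simp
      finally show ?thesis .
    qed
    have "Mn n \<le> Max ((\<lambda>i. \<bar>g (x n i) - lam n (\<tau>' i)\<bar>) ` S)"
      unfolding Mn_def S_def[symmetric] by (rule Min_le) (use fin p' in auto)
    hence le: "Mn n \<le> Mx n" using img by (simp add: Mx_def S_def)
    have "0 \<le> Mn n" unfolding Mn_def S_def[symmetric]
      using fin Mge permutes_id[of S] by (subst Min_ge_iff) (auto intro!: exI[of _ id])
    thus ?thesis using le by simp
  qed
  have "Mn \<longlonglongrightarrow> 0"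
  proof (rule tendsto_sandwich[OF _ _ tendsto_const Mx0])
    show "eventually (\<lambda>n. 0 \<le> Mn n) sequentially" using ev1 by eventually_elim (use bounds in blast)
    show "eventually (\<lambda>n. Mn n \<le> Mx n) sequentially" using ev1 by eventually_elim (use bounds in blast)
  qed
  hence "(\<lambda>n. Min ((\<lambda>\<tau>. Max ((\<lambda>i. \<bar>g (x n i) - lam n (\<tau> i)\<bar>) ` {1..m n})) ` {\<tau>. \<tau> permutes {1..m n}})) \<longlonglongrightarrow> 0"
    by (simp only: Mn_def[abs_def])
  hence "(\<lambda>n. Min ((\<lambda>\<tau>. Max ((\<lambda>i. \<bar>g (x n i) - lam n (\<tau> i)\<bar>) ` {1..size (Pj n)})) ` {\<tau>. \<tau> permutes {1..size (Pj n)}})) \<longlonglongrightarrow> 0"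
    by (simp only: m_def)
  with P1 show ?thesis by blast
qed

lemma mset_concat_upt: "mset (concat (map B [1..<k+1])) = (\<Sum>j\<in>{1..k}. mset (B j))"
  by (simp only: mset_concat map_map o_def sum_list_upt1)

lemma filter_mset_all: "(\<And>x. x \<in># M \<Longrightarrow> P x) \<Longrightarrow> filter_mset P M = M"
  by (induction M) auto

lemma filter_mset_none: "(\<And>x. x \<in># M \<Longrightarrow> \<not> P x) \<Longrightarrow> filter_mset P M = {#}"
  by (induction M) auto

lemma ratio_inf:
  fixes s d :: "nat \<Rightarrow> nat"
  assumes d: "filterlim d at_top sequentially" and r: "(\<lambda>n. real (s n) / real (d n)) \<longlonglongrightarrow> c" and c: "c > 0"
  shows "filterlim s at_top sequentially"
  unfolding filterlim_at_top
proof (intro allI)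
  fix Z :: nat
  have e1: "eventually (\<lambda>n. real (s n) / real (d n) > c / 2) sequentially"
    using r c by (intro order_tendstoD(1)) auto
  have "eventually (\<lambda>n. nat \<lceil>2 * real Z / c\<rceil> + 1 \<le> d n) sequentially" using d by (simp add: filterlim_at_top)
  thus "eventually (\<lambda>n. Z \<le> s n) sequentially" using e1
  proof eventually_elim
    case (elim n)
    have dpos: "real (d n) > 0" using elim(1) by simp
    have "2 * real Z / c \<le> real (d n)" using elim(1) by linarith
    hence "real Z \<le> c / 2 * real (d n)" using c by (simp add: field_simps)
    also have "\<dots> \<le> real (s n)" using elim(2) dpos by (simp add: field_simps)
    finally show ?case by simp
  qed
qed

context
  fixes a b :: real and k :: nat and f :: "nat \<Rightarrow> real \<Rightarrow> real"
    and Lam :: "nat \<Rightarrow> real multiset" and Lt :: "nat \<Rightarrow> nat \<Rightarrow> real multiset" and \<epsilon> :: "nat \<Rightarrow> real"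
  assumes ab: "a < b" and k: "k \<ge> 1"
    and bdd: "\<And>j. j \<in> {1..k} \<Longrightarrow> bounded (f j ` {a..b})"
    and cont_ae: "\<And>j. j \<in> {1..k} \<Longrightarrow>
         AE x in lebesgue. x \<in> {a..b} \<longrightarrow> continuous (at x within {a..b}) (f j)"
    and ER: "\<And>j. j \<in> {1..k} \<Longrightarrow>
         ess_range a b (f j) = {Inf (f j ` {a..b}) .. Sup (f j ` {a..b})}"
    and dn: "filterlim (\<lambda>n. size (Lam n)) at_top sequentially"
    and distr: "has_distr_diag a b k f Lam"
    and part: "\<And>n. (\<Sum>j\<in>{1..k}. Lt n j) = Lam n"
    and card: "\<And>j. j \<in> {1..k} \<Longrightarrow>
         (\<lambda>n. real (size (Lt n j)) / real (size (Lam n))) \<longlonglongrightarrow> 1 / real k"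
    and \<epsilon>0: "\<epsilon> \<longlonglongrightarrow> 0"
    and \<epsilon>c: "\<And>n j. j\<in>{1..k} \<Longrightarrow> set_mset (Lt n j) \<subseteq> {Inf (f j ` {a..b}) - \<epsilon> n .. Sup (f j ` {a..b}) + \<epsilon> n}"
begin

definition "\<alpha> j = Inf (f j ` {a..b})"
definition "\<beta> j = Sup (f j ` {a..b})"
definition "Mb = (\<Sum>j\<in>{1..k}. \<bar>\<alpha> j\<bar> + \<bar>\<beta> j\<bar>)"
definition "s n j = size (Lt n j)"
definition "gr n j i = a + real i * (b - a) / real (s n j)"
definition "Bl n j = map (\<lambda>i. (f j (gr n j i), j)) [1..<s n j + 1]"
definition "gs n j = map (\<lambda>i. f j (gr n j i)) [1..<s n j + 1]"
definition "T n = concat (map (Bl n) [1..<k+1])"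
definition "ts n = sort_key fst (T n)"
definition "ls n = sorted_list_of_multiset (Lam n)"
definition "Z n = zip (ls n) (ts n)"
definition "W n j = filter (\<lambda>z. snd (snd z) = j) (Z n)"
definition "pl n j = map fst (W n j)"
definition "ql n j = map (\<lambda>z. fst (snd z)) (W n j)"
definition "\<delta> n = (if Z n = [] then 0 else Max (set (map (\<lambda>z. \<bar>fst z - fst (snd z)\<bar>) (Z n))))"
definition "\<Phi>j j F = integral {a..b} (\<lambda>t. F (complex_of_real (f j t))) / complex_of_real (b - a)"
definition "\<Phi>mix F = integral {a..b} (\<lambda>x. (\<Sum>j=1..k. F (complex_of_real (f j x))) / of_nat k) / complex_of_real (b - a)"

lemma fab: "j \<in> {1..k} \<Longrightarrow> t \<in> {a..b} \<Longrightarrow> f j t \<in> {\<alpha> j..\<beta> j}"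
  unfolding \<alpha>_def \<beta>_def using bdd[of j]
  by (auto intro!: cInf_lower cSup_upper bounded_imp_bdd_below bounded_imp_bdd_above)

lemma \<alpha>\<beta>: "j \<in> {1..k} \<Longrightarrow> \<alpha> j \<le> \<beta> j"
  using fab[of j a] ab by auto

lemma Mb: "j \<in> {1..k} \<Longrightarrow> \<bar>\<alpha> j\<bar> \<le> Mb \<and> \<bar>\<beta> j\<bar> \<le> Mb"
proof -
  assume j: "j \<in> {1..k}"
  have "\<bar>\<alpha> j\<bar> + \<bar>\<beta> j\<bar> \<le> Mb" unfolding Mb_def
    by (rule member_le_sum[OF j]) auto
  thus ?thesis using abs_ge_zero[of "\<alpha> j"] abs_ge_zero[of "\<beta> j"] by linarith
qed

lemma dsize: "size (Lam n) = (\<Sum>j\<in>{1..k}. s n j)"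
proof -
  have "size (Lam n) = size (\<Sum>j\<in>{1..k}. Lt n j)" using part[of n] by simp
  also have "\<dots> = (\<Sum>j\<in>{1..k}. size (Lt n j))" by (rule size_multiset_sum)
  finally show ?thesis by (simp add: s_def)
qed

lemma sinf: "j \<in> {1..k} \<Longrightarrow> filterlim (\<lambda>n. s n j) at_top sequentially"
  unfolding s_def by (rule ratio_inf[OF dn card]) (use k in auto)

lemma mT: "mset (T n) = (\<Sum>j\<in>{1..k}. mset (Bl n j))"
  unfolding T_def by (rule mset_concat_upt)

lemma size_Bl: "size (mset (Bl n j)) = s n j" by (simp add: Bl_def)
lemma len_Bl: "length (Bl n j) = s n j" by (simp add: Bl_def)
lemma fst_Bl: "map fst (Bl n j) = gs n j" by (simp add: Bl_def gs_def o_def)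
lemma img_Bl: "image_mset fst (mset (Bl n j)) = mset (gs n j)" by (simp add: fst_Bl flip: mset_map)

lemma lenT: "length (T n) = size (Lam n)"
proof -
  have "length (T n) = size (mset (T n))" by simp
  also have "\<dots> = (\<Sum>j\<in>{1..k}. s n j)" by (simp only: mT size_multiset_sum size_Bl)
  finally show ?thesis by (simp add: dsize)
qed

lemma lents: "length (ts n) = size (Lam n)" by (simp add: ts_def lenT)
lemma lenls: "length (ls n) = size (Lam n)"
  by (metis ls_def mset_sorted_list_of_multiset size_mset)

lemma gr_in: "i \<in> {1..s n j} \<Longrightarrow> gr n j i \<in> {a..b}"
  unfolding gr_def using std_grid(2)[OF ab] by blast

lemma setT: "p \<in> set (T n) \<Longrightarrow> snd p \<in> {1..k} \<and> fst p \<in> {\<alpha> (snd p)..\<beta> (snd p)}"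
proof -
  assume "p \<in> set (T n)"
  then obtain j where j: "j \<in> set [1..<k+1]" and pj: "p \<in> set (Bl n j)"
    unfolding T_def by auto
  from pj obtain i where i: "i \<in> set [1..<s n j+1]" and p: "p = (f j (gr n j i), j)"
    unfolding Bl_def by auto
  have j: "j \<in> {1..k}" and i: "i \<in> {1..s n j}" using i j by auto
  thus ?thesis using fab[OF j gr_in[OF i]] p by simp
qed

lemma setts: "set (ts n) = set (T n)" by (simp add: ts_def)

lemma mapsnd: "map snd (Z n) = ts n" unfolding Z_def by (rule map_snd_zip) (simp add: lents lenls)
lemma mapfst: "map fst (Z n) = ls n" unfolding Z_def by (rule map_fst_zip) (simp add: lents lenls)

lemma setZ: "z \<in> set (Z n) \<Longrightarrow> snd z \<in> set (ts n)"
  using mapsnd[of n] by (metis image_eqI list.set_map)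

lemma partition: "(\<Sum>j\<in>{1..k}. mset (pl n j)) = Lam n"
proof -
  have "(\<Sum>j\<in>{1..k}. mset (map fst (filter (\<lambda>z. snd (snd z) = j) (Z n)))) = mset (map fst (Z n))"
  proof (rule mset_filter_tags)
    fix z assume "z \<in> set (Z n)"
    thus "snd (snd z) \<in> {1..k}" using setZ setts setT by blast
  qed simp
  thus ?thesis by (simp add: pl_def W_def mapfst ls_def)
qed

lemma filter_Bl: "filter_mset (\<lambda>p. snd p = j) (mset (Bl n j')) = (if j' = j then mset (Bl n j') else {#})"
  by (auto simp: Bl_def filter_mset_eq_conv simp del: upt_Suc)

lemma mset_filter_ts: "j \<in> {1..k} \<Longrightarrow> filter_mset (\<lambda>p. snd p = j) (mset (ts n)) = mset (Bl n j)"
proof -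
  assume j: "j \<in> {1..k}"
  have "filter_mset (\<lambda>p. snd p = j) (mset (ts n)) = (\<Sum>j'\<in>{1..k}. filter_mset (\<lambda>p. snd p = j) (mset (Bl n j')))"
    by (simp add: ts_def mT filter_mset_sum)
  also have "\<dots> = (\<Sum>j'\<in>{1..k}. (if j' = j then mset (Bl n j') else {#}))"
    by (simp add: filter_Bl)
  also have "\<dots> = mset (Bl n j)" using j by (simp add: sum.delta')
  finally show ?thesis .
qed

lemma W_ts: "map snd (W n j) = filter (\<lambda>p. snd p = j) (ts n)"
  unfolding W_def by (simp add: mapsnd[symmetric] filter_map o_def)

lemma sizeP: "j \<in> {1..k} \<Longrightarrow> length (pl n j) = s n j"
proof -
  assume j: "j \<in> {1..k}"
  have "length (pl n j) = length (map snd (W n j))" by (simp add: pl_def)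
  also have "\<dots> = size (filter_mset (\<lambda>p. snd p = j) (mset (ts n)))" by (simp add: W_ts flip: mset_filter)
  also have "\<dots> = s n j" using mset_filter_ts[OF j] size_Bl by simp
  finally show ?thesis .
qed

lemma mset_ql: "j \<in> {1..k} \<Longrightarrow> mset (ql n j) = mset (gs n j)"
proof -
  assume j: "j \<in> {1..k}"
  have "ql n j = map fst (map snd (W n j))" by (simp add: ql_def)
  hence "mset (ql n j) = image_mset fst (filter_mset (\<lambda>p. snd p = j) (mset (ts n)))"
    by (simp add: W_ts mset_map flip: mset_filter)
  also have "\<dots> = image_mset fst (mset (Bl n j))" using mset_filter_ts[OF j] by simp
  also have "\<dots> = mset (gs n j)" by (rule img_Bl)
  finally show ?thesis .
qed

lemma len_pq: "length (ql n j) = length (pl n j)" by (simp add: pl_def ql_def)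

lemma \<delta>_ge: "z \<in> set (Z n) \<Longrightarrow> \<bar>fst z - fst (snd z)\<bar> \<le> \<delta> n"
  unfolding \<delta>_def by (auto intro!: Max_ge)

lemma \<delta>_nonneg: "\<delta> n \<ge> 0"
proof (cases "Z n = []")
  case False
  then obtain z zs where "Z n = z # zs" by (cases "Z n") auto
  hence "z \<in> set (Z n)" by simp
  thus ?thesis using \<delta>_ge[of z n] by linarith
qed (simp add: \<delta>_def)

lemma close: "i < length (ql n j) \<Longrightarrow> \<bar>ql n j ! i - pl n j ! i\<bar> \<le> \<delta> n"
proof -
  assume i: "i < length (ql n j)"
  hence "W n j ! i \<in> set (Z n)" by (metis W_def filter_is_subset length_map nth_mem ql_def subsetD)
  hence "\<bar>fst (W n j ! i) - fst (snd (W n j ! i))\<bar> \<le> \<delta> n" by (rule \<delta>_ge)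
  thus ?thesis using i by (simp add: pl_def ql_def abs_minus_commute)
qed

lemma setP: "j \<in> {1..k} \<Longrightarrow> t \<in> set (pl n j) \<Longrightarrow> t \<in> {\<alpha> j - \<delta> n .. \<beta> j + \<delta> n}"
proof -
  assume j: "j \<in> {1..k}" and "t \<in> set (pl n j)"
  then obtain z where z: "z \<in> set (Z n)" "snd (snd z) = j" "t = fst z" by (auto simp: pl_def W_def)
  have "snd z \<in> set (T n)" using setZ[OF z(1)] setts by simp
  hence "fst (snd z) \<in> {\<alpha> j..\<beta> j}" using setT z(2) by blast
  moreover have "\<bar>fst z - fst (snd z)\<bar> \<le> \<delta> n" by (rule \<delta>_ge[OF z(1)])
  ultimately show ?thesis using z(3) by (auto simp: abs_le_iff)
qed

lemma mset_ls: "mset (ls n) = Lam n" by (simp add: ls_def)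

lemma conv_ls: "conv_to (\<lambda>n. mset (ls n)) \<Phi>mix"
  using distr unfolding has_distr_diag_def conv_to_def testf_def dsum_def \<Phi>mix_def mset_ls by blast

lemma conv_gs: "j \<in> {1..k} \<Longrightarrow> conv_to (\<lambda>n. mset (gs n j)) (\<Phi>j j)"
proof -
  assume j: "j \<in> {1..k}"
  note G = gen_grid[OF ab sinf[OF j]]
  have "conv_to (\<lambda>n. mset (map (\<lambda>i. f j (a + real i * (b - a) / real (s n j))) [1..<s n j + 1]))
           (\<lambda>F. integral {a..b} (\<lambda>t. F (of_real (f j t))) / of_real (b - a))"
    by (rule grid_conv[OF ab cont_ae[OF j] G(1)]) (use G(2) in blast)
  moreover have "(\<lambda>F. integral {a..b} (\<lambda>t. F (of_real (f j t))) / of_real (b - a)) = \<Phi>j j"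
    by (simp add: \<Phi>j_def fun_eq_iff)
  ultimately show ?thesis by (simp add: gs_def gr_def)
qed

lemma \<Phi>mix_eq: "testf F \<Longrightarrow> \<Phi>mix F = (\<Sum>j\<in>{1..k}. \<Phi>j j F) / of_nat k"
proof -
  assume F: "testf F"
  have "integral {a..b} (\<lambda>x. (\<Sum>j=1..k. F (complex_of_real (f j x))) / of_nat k)
      = integral {a..b} (\<lambda>x. (\<Sum>j=1..k. F (complex_of_real (f j x)))) / of_nat k"
    by (rule integral_divide)
  also have "integral {a..b} (\<lambda>x. (\<Sum>j=1..k. F (complex_of_real (f j x)))) = (\<Sum>j=1..k. integral {a..b} (\<lambda>x. F (complex_of_real (f j x))))"
    by (rule integral_sum) (auto intro: comp_integrable[OF ab cont_ae F])
  finally show ?thesis unfolding \<Phi>mix_def \<Phi>j_def by (simp add: sum_divide_distrib ac_simps)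
qed

lemma mset_fst_ts: "mset (map fst (ts n)) = (\<Sum>j\<in>{1..k}. mset (gs n j))"
proof -
  have "mset (map fst (ts n)) = image_mset fst (mset (T n))" by (simp add: ts_def mset_map)
  also have "\<dots> = (\<Sum>j\<in>{1..k}. image_mset fst (mset (Bl n j)))" by (simp add: mT image_mset_sum')
  also have "\<dots> = (\<Sum>j\<in>{1..k}. mset (gs n j))" by (simp only: img_Bl)
  finally show ?thesis .
qed

lemma size_gs: "size (mset (gs n j)) = s n j" by (simp add: gs_def)
lemma len_gs: "length (gs n j) = s n j" by (simp add: gs_def)

lemma conv_ts: "conv_to (\<lambda>n. mset (map fst (ts n))) \<Phi>mix"
  unfolding conv_to_def
proof (intro allI impI)
  fix F assume F: "testf F"
  have ev: "eventually (\<lambda>n. size (Lam n) > 0) sequentially"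
  proof -
    have "eventually (\<lambda>n. 1 \<le> size (Lam n)) sequentially" using dn by (simp add: filterlim_at_top)
    thus ?thesis by (rule eventually_mono) simp
  qed
  have lim: "(\<lambda>n. \<Sum>j\<in>{1..k}. complex_of_real (real (s n j) / real (size (Lam n))) * dsum F (mset (gs n j)))
      \<longlonglongrightarrow> (\<Sum>j\<in>{1..k}. complex_of_real (1 / real k) * \<Phi>j j F)"
  proof (intro tendsto_sum tendsto_mult tendsto_of_real)
    fix j assume j: "j \<in> {1..k}"
    show "(\<lambda>n. real (s n j) / real (size (Lam n))) \<longlonglongrightarrow> 1 / real k" using card[OF j] by (simp add: s_def)
    show "(\<lambda>n. dsum F (mset (gs n j))) \<longlonglongrightarrow> \<Phi>j j F" using conv_gs[OF j] F by (simp add: conv_to_def)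
  qed
  have eqv: "(\<Sum>j\<in>{1..k}. complex_of_real (1 / real k) * \<Phi>j j F) = \<Phi>mix F"
    by (simp add: \<Phi>mix_eq[OF F] sum_distrib_left[symmetric] divide_inverse mult.commute)
  have "eventually (\<lambda>n. (\<Sum>j\<in>{1..k}. complex_of_real (real (s n j) / real (size (Lam n))) * dsum F (mset (gs n j)))
     = dsum F (mset (map fst (ts n)))) sequentially"
    using ev
  proof (rule eventually_mono)
    fix n assume "size (Lam n) > 0"
    hence pos: "(\<Sum>j\<in>{1..k}. size (mset (gs n j))) > 0" by (simp add: len_gs dsize)
    show "(\<Sum>j\<in>{1..k}. complex_of_real (real (s n j) / real (size (Lam n))) * dsum F (mset (gs n j)))
     = dsum F (mset (map fst (ts n)))"
      unfolding mset_fst_ts dsum_sum[OF finite_atLeastAtMost pos] by (simp add: len_gs dsize)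
  qed
  from Lim_transform_eventually[OF lim[unfolded eqv] this]
  show "(\<lambda>n. dsum F (mset (map fst (ts n)))) \<longlonglongrightarrow> \<Phi>mix F" .
qed

lemma ev_eps: "c > 0 \<Longrightarrow> eventually (\<lambda>n. \<epsilon> n < c) sequentially"
  using \<epsilon>0 by (rule order_tendstoD(2))

lemma count_Lt:
  assumes j: "j \<in> {1..k}" and e: "\<epsilon> n < (v - u) / 2" and uv: "u < v"
    and out: "\<beta> j < u \<or> v < \<alpha> j"
  shows "size (filter_mset (\<lambda>t. t \<le> (u+v)/2) (Lt n j)) = (if \<beta> j < u then s n j else 0)"
proof (cases "\<beta> j < u")
  case True
  have "filter_mset (\<lambda>t. t \<le> (u+v)/2) (Lt n j) = Lt n j"
  proof (rule filter_mset_all)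
    fix t assume "t \<in># Lt n j"
    hence "t \<le> \<beta> j + \<epsilon> n" using \<epsilon>c[OF j, of n] by (auto simp: \<beta>_def)
    thus "t \<le> (u+v)/2" using True e by simp
  qed
  thus ?thesis using True by (simp add: s_def)
next
  case False
  hence vl: "v < \<alpha> j" using out by simp
  have "filter_mset (\<lambda>t. t \<le> (u+v)/2) (Lt n j) = {#}"
  proof (rule filter_mset_none)
    fix t assume "t \<in># Lt n j"
    hence "\<alpha> j - \<epsilon> n \<le> t" using \<epsilon>c[OF j, of n] by (auto simp: \<alpha>_def)
    thus "\<not> t \<le> (u+v)/2" using vl e by simp
  qed
  thus ?thesis using False by simp
qed

lemma count_gs:
  assumes j: "j \<in> {1..k}" and uv: "u < v" and out: "\<beta> j < u \<or> v < \<alpha> j"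
  shows "size (filter_mset (\<lambda>t. t \<le> (u+v)/2) (mset (gs n j))) = (if \<beta> j < u then s n j else 0)"
proof -
  have vals: "t \<in> set (gs n j) \<Longrightarrow> t \<in> {\<alpha> j..\<beta> j}" for t
    unfolding gs_def using fab[OF j] gr_in by auto
  show ?thesis
  proof (cases "\<beta> j < u")
    case True
    have "filter_mset (\<lambda>t. t \<le> (u+v)/2) (mset (gs n j)) = mset (gs n j)"
      by (rule filter_mset_all) (use vals True uv in fastforce)
    thus ?thesis using True by (simp add: len_gs)
  next
    case False
    hence vl: "v < \<alpha> j" using out by simp
    have "filter_mset (\<lambda>t. t \<le> (u+v)/2) (mset (gs n j)) = {#}"
      by (rule filter_mset_none) (use vals vl uv in fastforce)
    thus ?thesis using False by simp
  qed
qed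

lemma gap_mix: "gapcond \<Phi>mix ls (\<lambda>n. map fst (ts n))"
  unfolding gapcond_def
proof (intro allI impI)
  fix u v :: real assume uv: "u < v"
  show "(\<forall>G. testf G \<and> (\<forall>t. Re (G (complex_of_real t)) \<ge> 0) \<and> (\<forall>t\<in>{u..v}. Re (G (complex_of_real t)) \<ge> 1) \<longrightarrow> Re (\<Phi>mix G) > 0)
     \<or> eventually (\<lambda>n. length (filter (\<lambda>t. t \<le> (u+v)/2) (ls n)) = length (filter (\<lambda>t. t \<le> (u+v)/2) (map fst (ts n)))) sequentially"
  proof (cases "\<exists>j\<in>{1..k}. \<exists>z\<in>{u..v}. z \<in> {\<alpha> j..\<beta> j}")
    case True
    then obtain j z where j: "j \<in> {1..k}" and z: "z \<in> {u..v}" "z \<in> {\<alpha> j..\<beta> j}" by blast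
    have "Re (\<Phi>mix G) > 0" if G: "testf G" and Gnn: "\<forall>t. Re (G (complex_of_real t)) \<ge> 0"
      and G1: "\<forall>t\<in>{u..v}. Re (G (complex_of_real t)) \<ge> 1" for G
    proof -
      have Rj: "Re (\<Phi>j j' G) = Re (integral {a..b} (\<lambda>t. G (complex_of_real (f j' t)))) / (b - a)" for j'
        by (simp add: \<Phi>j_def Re_divide_of_real)
      have "0 < (\<Sum>j'\<in>{1..k}. Re (\<Phi>j j' G))"
      proof (rule sum_pos2[OF finite_atLeastAtMost j])
        have "Re (integral {a..b} (\<lambda>t. G (complex_of_real (f j t)))) > 0"
          by (rule ER_pos[OF ab cont_ae[OF j] ER[OF j] _ G]) (use z G1 Gnn in \<open>auto simp: \<alpha>_def \<beta>_def\<close>)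
        thus "0 < Re (\<Phi>j j G)" using ab by (simp add: Rj)
        fix j' assume j': "j' \<in> {1..k}"
        have "Re (integral {a..b} (\<lambda>t. G (complex_of_real (f j' t)))) \<ge> 0"
          by (rule ER_nonneg[OF ab cont_ae[OF j'] G]) (use Gnn in auto)
        thus "0 \<le> Re (\<Phi>j j' G)" using ab by (simp add: Rj)
      qed
      moreover have "Re (\<Phi>mix G) = (\<Sum>j'\<in>{1..k}. Re (\<Phi>j j' G)) / real k"
        by (simp add: \<Phi>mix_eq[OF G] Re_sum Re_divide_of_nat)
      ultimately show ?thesis using k by simp
    qed
    thus ?thesis by blast
  next
    case False
    have out: "\<beta> j < u \<or> v < \<alpha> j" if j: "j \<in> {1..k}" for j
    proof (rule ccontr)
      assume "\<not> (\<beta> j < u \<or> v < \<alpha> j)"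
      hence "max u (\<alpha> j) \<in> {u..v}" "max u (\<alpha> j) \<in> {\<alpha> j..\<beta> j}" using uv \<alpha>\<beta>[OF j] by auto
      thus False using False j by blast
    qed
    have "eventually (\<lambda>n. \<epsilon> n < (v - u) / 2) sequentially" using uv by (intro ev_eps) simp
    hence "eventually (\<lambda>n. length (filter (\<lambda>t. t \<le> (u+v)/2) (ls n)) = length (filter (\<lambda>t. t \<le> (u+v)/2) (map fst (ts n)))) sequentially"
    proof (rule eventually_mono)
      fix n assume e: "\<epsilon> n < (v - u) / 2"
      have "length (filter (\<lambda>t. t \<le> (u+v)/2) (ls n)) = size (filter_mset (\<lambda>t. t \<le> (u+v)/2) (Lam n))"
        by (metis mset_filter mset_ls size_mset)
      also have "\<dots> = (\<Sum>j\<in>{1..k}. size (filter_mset (\<lambda>t. t \<le> (u+v)/2) (Lt n j)))"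
        by (simp add: part[symmetric] filter_mset_sum size_multiset_sum)
      also have "\<dots> = (\<Sum>j\<in>{1..k}. (if \<beta> j < u then s n j else 0))"
        by (rule sum.cong[OF refl], rule count_Lt[OF _ e uv out])
      also have "\<dots> = (\<Sum>j\<in>{1..k}. size (filter_mset (\<lambda>t. t \<le> (u+v)/2) (mset (gs n j))))"
        by (rule sum.cong[OF refl], rule count_gs[symmetric, OF _ uv out])
      also have "\<dots> = size (filter_mset (\<lambda>t. t \<le> (u+v)/2) (mset (map fst (ts n))))"
        by (simp only: mset_fst_ts filter_mset_sum size_multiset_sum)
      also have "\<dots> = length (filter (\<lambda>t. t \<le> (u+v)/2) (map fst (ts n)))"
        by (metis mset_filter size_mset)
      finally show "length (filter (\<lambda>t. t \<le> (u+v)/2) (ls n)) = length (filter (\<lambda>t. t \<le> (u+v)/2) (map fst (ts n)))" .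
    qed
    thus ?thesis by blast
  qed
qed

lemma ev_eps1: "eventually (\<lambda>n. \<epsilon> n < 1) sequentially" by (rule ev_eps) simp

lemma bnd_mix: "eventually (\<lambda>n. set (ls n) \<union> set (map fst (ts n)) \<subseteq> {- Mb - 1 .. Mb + 1}) sequentially"
  using ev_eps1
proof (rule eventually_mono)
  fix n assume e: "\<epsilon> n < 1"
  have "set (ls n) \<subseteq> {- Mb - 1 .. Mb + 1}"
  proof
    fix t assume "t \<in> set (ls n)"
    hence "t \<in># (\<Sum>j\<in>{1..k}. Lt n j)" by (simp add: ls_def part[symmetric])
    then obtain j where j: "j \<in> {1..k}" and "t \<in># Lt n j" by (auto simp: set_mset_sum)
    hence "t \<in> {\<alpha> j - \<epsilon> n .. \<beta> j + \<epsilon> n}" using \<epsilon>c[OF j, of n] by (auto simp: \<alpha>_def \<beta>_def)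
    thus "t \<in> {- Mb - 1 .. Mb + 1}" using Mb[OF j] e by (auto simp: abs_le_iff)
  qed
  moreover have "set (map fst (ts n)) \<subseteq> {- Mb - 1 .. Mb + 1}"
  proof
    fix t assume "t \<in> set (map fst (ts n))"
    then obtain p where "p \<in> set (T n)" "t = fst p" by (auto simp: setts)
    hence "snd p \<in> {1..k}" "t \<in> {\<alpha> (snd p)..\<beta> (snd p)}" using setT by auto
    thus "t \<in> {- Mb - 1 .. Mb + 1}" using Mb[of "snd p"] by (auto simp: abs_le_iff)
  qed
  ultimately show "set (ls n) \<union> set (map fst (ts n)) \<subseteq> {- Mb - 1 .. Mb + 1}" by blast
qed

lemma \<delta>_lim: "\<delta> \<longlonglongrightarrow> 0"
proof (rule LIMSEQ_I)
  fix e :: real assume e: "e > 0"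
  have len: "length (ls n) = length (map fst (ts n))" for n by (simp add: lenls lents)
  have "eventually (\<lambda>n. \<forall>i<length (ls n). \<bar>ls n ! i - map fst (ts n) ! i\<bar> < e) sequentially"
    by (rule sort_match[OF len _ _ conv_ls conv_ts gap_mix bnd_mix e])
       (auto simp: ls_def ts_def intro: sorted_sort_key)
  then obtain N where N: "\<And>n. n \<ge> N \<Longrightarrow> \<forall>i<length (ls n). \<bar>ls n ! i - map fst (ts n) ! i\<bar> < e"
    by (auto simp: eventually_sequentially)
  show "\<exists>N. \<forall>n\<ge>N. norm (\<delta> n - 0) < e"
  proof (intro exI allI impI)
    fix n assume "n \<ge> N"
    hence Nn: "\<forall>i<length (ls n). \<bar>ls n ! i - map fst (ts n) ! i\<bar> < e" by (rule N)
    have "\<delta> n < e"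
    proof (cases "Z n = []")
      case True thus ?thesis using e by (simp add: \<delta>_def)
    next
      case False
      have "\<forall>w\<in>set (map (\<lambda>z. \<bar>fst z - fst (snd z)\<bar>) (Z n)). w < e"
      proof
        fix w assume "w \<in> set (map (\<lambda>z. \<bar>fst z - fst (snd z)\<bar>) (Z n))"
        then obtain z where z: "z \<in> set (Z n)" "w = \<bar>fst z - fst (snd z)\<bar>" by auto
        then obtain i where i: "i < length (ls n)" "i < length (ts n)" "ls n ! i = fst z" "ts n ! i = snd z"
          unfolding Z_def in_set_zip by blast
        show "w < e" using Nn i z(2) by auto
      qed
      thus ?thesis using False by (simp add: \<delta>_def)
    qed
    thus "norm (\<delta> n - 0) < e" using \<delta>_nonneg[of n] by simp
  qed
qed

lemma c_prop: "j \<in> {1..k} \<Longrightarrow> conv_to (\<lambda>n. mset (pl n j)) (\<Phi>j j)"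
proof -
  assume j: "j \<in> {1..k}"
  have cq: "conv_to (\<lambda>n. mset (ql n j)) (\<Phi>j j)" using conv_gs[OF j] by (simp add: mset_ql[OF j])
  have cl: "\<And>n i. i < length (ql n j) \<Longrightarrow> \<bar>ql n j ! i - pl n j ! i\<bar> \<le> \<delta> n" by (rule close)
  from perturb[where xs="\<lambda>n. ql n j" and ys="\<lambda>n. pl n j" and \<delta>=\<delta>, OF len_pq \<delta>_lim cl cq]
  show ?thesis .
qed

lemma main_ctx:
  shows "\<exists>P :: nat \<Rightarrow> nat \<Rightarrow> real multiset.
     (\<forall>n. (\<Sum>j\<in>{1..k}. P n j) = Lam n) \<and>
     (\<forall>n. \<forall>j\<in>{1..k}. size (P n j) = size (Lt n j)) \<and>
     (\<exists>\<delta>::nat \<Rightarrow> real. \<delta> \<longlonglongrightarrow> 0 \<and>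
         (\<forall>n. \<forall>j\<in>{1..k}. set_mset (P n j) \<subseteq>
             {Inf (f j ` {a..b}) - \<delta> n .. Sup (f j ` {a..b}) + \<delta> n})) \<and>
     (\<forall>j\<in>{1..k}. has_distr a b (f j) (\<lambda>n. P n j)) \<and>
     (\<forall>j\<in>{1..k}. \<forall>x :: nat \<Rightarrow> nat \<Rightarrow> real.
        asym_unif_grid a b (\<lambda>n. size (P n j)) x \<and>
        (\<forall>n. \<forall>i\<in>{1..size (P n j)}. x n i \<in> {a..b}) \<longrightarrow>
        (\<forall>lam :: nat \<Rightarrow> nat \<Rightarrow> real.
          (\<forall>n. mset (map (lam n) [1..<size (P n j) + 1]) = P n j) \<longrightarrow>
          ((\<forall>\<sigma> \<tau> :: nat \<Rightarrow> nat \<Rightarrow> nat.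
              (\<forall>n. \<sigma> n permutes {1..size (P n j)} \<and> \<tau> n permutes {1..size (P n j)} \<and>
                   sorted (map (\<lambda>i. f j (x n (\<sigma> n i))) [1..<size (P n j) + 1]) \<and>
                   sorted (map (\<lambda>i. lam n (\<tau> n i)) [1..<size (P n j) + 1])) \<longrightarrow>
              (\<lambda>n. Max ((\<lambda>i. \<bar>f j (x n (\<sigma> n i)) - lam n (\<tau> n i)\<bar>) ` {1..size (P n j)}))
                \<longlonglongrightarrow> 0) \<and>
           (\<lambda>n. Min ((\<lambda>\<tau>. Max ((\<lambda>i. \<bar>f j (x n i) - lam n (\<tau> i)\<bar>) ` {1..size (P n j)}))
                       ` {\<tau>. \<tau> permutes {1..size (P n j)}})) \<longlonglongrightarrow> 0)))"
proof (intro exI[of _ "\<lambda>n j. mset (pl n j)"] conjI)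
  show "\<forall>n. (\<Sum>j\<in>{1..k}. mset (pl n j)) = Lam n" using partition by blast
  show "\<forall>n. \<forall>j\<in>{1..k}. size (mset (pl n j)) = size (Lt n j)" using sizeP by (simp add: s_def)
  show "\<exists>\<delta>::nat \<Rightarrow> real. \<delta> \<longlonglongrightarrow> 0 \<and>
         (\<forall>n. \<forall>j\<in>{1..k}. set_mset (mset (pl n j)) \<subseteq>
             {Inf (f j ` {a..b}) - \<delta> n .. Sup (f j ` {a..b}) + \<delta> n})"
    using \<delta>_lim setP unfolding \<alpha>_def \<beta>_def by (intro exI[of _ \<delta>]) auto
  have cP: "conv_to (\<lambda>n. mset (pl n j)) (\<lambda>F. integral {a..b} (\<lambda>t. F (complex_of_real (f j t))) / complex_of_real (b - a))"
    if j: "j \<in> {1..k}" for j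
    using c_prop[OF j] by (simp add: \<Phi>j_def[abs_def])
  show "\<forall>j\<in>{1..k}. has_distr a b (f j) (\<lambda>n. mset (pl n j))"
  proof
    fix j assume j: "j \<in> {1..k}"
    have "filterlim (\<lambda>n. size (mset (pl n j))) at_top sequentially" using sinf[OF j] sizeP[OF j] by simp
    thus "has_distr a b (f j) (\<lambda>n. mset (pl n j))"
      using cP[OF j] unfolding has_distr_def conv_to_def testf_def dsum_def by blast
  qed
  show "\<forall>j\<in>{1..k}. \<forall>x :: nat \<Rightarrow> nat \<Rightarrow> real.
        asym_unif_grid a b (\<lambda>n. size (mset (pl n j))) x \<and>
        (\<forall>n. \<forall>i\<in>{1..size (mset (pl n j))}. x n i \<in> {a..b}) \<longrightarrow>
        (\<forall>lam :: nat \<Rightarrow> nat \<Rightarrow> real.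
          (\<forall>n. mset (map (lam n) [1..<size (mset (pl n j)) + 1]) = mset (pl n j)) \<longrightarrow>
          ((\<forall>\<sigma> \<tau> :: nat \<Rightarrow> nat \<Rightarrow> nat.
              (\<forall>n. \<sigma> n permutes {1..size (mset (pl n j))} \<and> \<tau> n permutes {1..size (mset (pl n j))} \<and>
                   sorted (map (\<lambda>i. f j (x n (\<sigma> n i))) [1..<size (mset (pl n j)) + 1]) \<and>
                   sorted (map (\<lambda>i. lam n (\<tau> n i)) [1..<size (mset (pl n j)) + 1])) \<longrightarrow>
              (\<lambda>n. Max ((\<lambda>i. \<bar>f j (x n (\<sigma> n i)) - lam n (\<tau> n i)\<bar>) ` {1..size (mset (pl n j))}))
                \<longlonglongrightarrow> 0) \<and>
           (\<lambda>n. Min ((\<lambda>\<tau>. Max ((\<lambda>i. \<bar>f j (x n i) - lam n (\<tau> i)\<bar>) ` {1..size (mset (pl n j))}))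
                       ` {\<tau>. \<tau> permutes {1..size (mset (pl n j))}})) \<longlonglongrightarrow> 0))"
  proof (intro ballI allI impI)
    fix j x lam
    assume j: "j \<in> {1..k}"
      and gx: "asym_unif_grid a b (\<lambda>n. size (mset (pl n j))) x \<and> (\<forall>n. \<forall>i\<in>{1..size (mset (pl n j))}. x n i \<in> {a..b})"
      and lamP: "\<forall>n. mset (map (lam n) [1..<size (mset (pl n j)) + 1]) = mset (pl n j)"
    have sP: "\<And>n t. t \<in># mset (pl n j) \<Longrightarrow> t \<in> {Inf (f j ` {a..b}) - \<delta> n .. Sup (f j ` {a..b}) + \<delta> n}"
      using setP[OF j] unfolding \<alpha>_def \<beta>_def by simp
    show "(\<forall>\<sigma> \<tau> :: nat \<Rightarrow> nat \<Rightarrow> nat.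
              (\<forall>n. \<sigma> n permutes {1..size (mset (pl n j))} \<and> \<tau> n permutes {1..size (mset (pl n j))} \<and>
                   sorted (map (\<lambda>i. f j (x n (\<sigma> n i))) [1..<size (mset (pl n j)) + 1]) \<and>
                   sorted (map (\<lambda>i. lam n (\<tau> n i)) [1..<size (mset (pl n j)) + 1])) \<longrightarrow>
              (\<lambda>n. Max ((\<lambda>i. \<bar>f j (x n (\<sigma> n i)) - lam n (\<tau> n i)\<bar>) ` {1..size (mset (pl n j))}))
                \<longlonglongrightarrow> 0) \<and>
           (\<lambda>n. Min ((\<lambda>\<tau>. Max ((\<lambda>i. \<bar>f j (x n i) - lam n (\<tau> i)\<bar>) ` {1..size (mset (pl n j))}))
                       ` {\<tau>. \<tau> permutes {1..size (mset (pl n j))}})) \<longlonglongrightarrow> 0"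
      by (rule d_general[where Pj="\<lambda>n. mset (pl n j)", OF ab cont_ae[OF j] ER[OF j] bdd[OF j] cP[OF j] \<delta>_lim sP
            conjunct1[OF gx] conjunct2[OF gx] lamP])
  qed
qed

end

theorem theorem2p7:
  fixes a b :: real and k :: nat
    and f :: "nat \<Rightarrow> real \<Rightarrow> real"
    and Lam :: "nat \<Rightarrow> real multiset"
    and Lt :: "nat \<Rightarrow> nat \<Rightarrow> real multiset"
  assumes ab: "a < b" and k: "k \<ge> 1"
    and bdd: "\<And>j. j \<in> {1..k} \<Longrightarrow> bounded (f j ` {a..b})"
    and cont_ae: "\<And>j. j \<in> {1..k} \<Longrightarrow>
         AE x in lebesgue. x \<in> {a..b} \<longrightarrow> continuous (at x within {a..b}) (f j)"
    and ER: "\<And>j. j \<in> {1..k} \<Longrightarrow>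
         ess_range a b (f j) = {Inf (f j ` {a..b}) .. Sup (f j ` {a..b})}"
    and dn: "filterlim (\<lambda>n. size (Lam n)) at_top sequentially"
    and distr: "has_distr_diag a b k f Lam"
    and part: "\<And>n. (\<Sum>j\<in>{1..k}. Lt n j) = Lam n"
    and card: "\<And>j. j \<in> {1..k} \<Longrightarrow>
         (\<lambda>n. real (size (Lt n j)) / real (size (Lam n))) \<longlonglongrightarrow> 1 / real k"
    and eps: "\<exists>\<epsilon>::nat \<Rightarrow> real. \<epsilon> \<longlonglongrightarrow> 0 \<and>
         (\<forall>n. \<forall>j\<in>{1..k}. set_mset (Lt n j) \<subseteq>
             {Inf (f j ` {a..b}) - \<epsilon> n .. Sup (f j ` {a..b}) + \<epsilon> n})"
  shows "\<exists>P :: nat \<Rightarrow> nat \<Rightarrow> real multiset.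
     (\<forall>n. (\<Sum>j\<in>{1..k}. P n j) = Lam n) \<and>
     (\<forall>n. \<forall>j\<in>{1..k}. size (P n j) = size (Lt n j)) \<and>
     (\<exists>\<delta>::nat \<Rightarrow> real. \<delta> \<longlonglongrightarrow> 0 \<and>
         (\<forall>n. \<forall>j\<in>{1..k}. set_mset (P n j) \<subseteq>
             {Inf (f j ` {a..b}) - \<delta> n .. Sup (f j ` {a..b}) + \<delta> n})) \<and>
     (\<forall>j\<in>{1..k}. has_distr a b (f j) (\<lambda>n. P n j)) \<and>
     (\<forall>j\<in>{1..k}. \<forall>x :: nat \<Rightarrow> nat \<Rightarrow> real.
        asym_unif_grid a b (\<lambda>n. size (P n j)) x \<and>
        (\<forall>n. \<forall>i\<in>{1..size (P n j)}. x n i \<in> {a..b}) \<longrightarrow>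
        (\<forall>lam :: nat \<Rightarrow> nat \<Rightarrow> real.
          (\<forall>n. mset (map (lam n) [1..<size (P n j) + 1]) = P n j) \<longrightarrow>
          ((\<forall>\<sigma> \<tau> :: nat \<Rightarrow> nat \<Rightarrow> nat.
              (\<forall>n. \<sigma> n permutes {1..size (P n j)} \<and> \<tau> n permutes {1..size (P n j)} \<and>
                   sorted (map (\<lambda>i. f j (x n (\<sigma> n i))) [1..<size (P n j) + 1]) \<and>
                   sorted (map (\<lambda>i. lam n (\<tau> n i)) [1..<size (P n j) + 1])) \<longrightarrow>
              (\<lambda>n. Max ((\<lambda>i. \<bar>f j (x n (\<sigma> n i)) - lam n (\<tau> n i)\<bar>) ` {1..size (P n j)}))
                \<longlonglongrightarrow> 0) \<and>
           (\<lambda>n. Min ((\<lambda>\<tau>. Max ((\<lambda>i. \<bar>f j (x n i) - lam n (\<tau> i)\<bar>) ` {1..size (P n j)}))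
                       ` {\<tau>. \<tau> permutes {1..size (P n j)}})) \<longlonglongrightarrow> 0)))"
  proof -
  from eps obtain \<epsilon> :: "nat \<Rightarrow> real" where e0: "\<epsilon> \<longlonglongrightarrow> 0"
    and ec: "\<forall>n. \<forall>j\<in>{1..k}. set_mset (Lt n j) \<subseteq> {Inf (f j ` {a..b}) - \<epsilon> n .. Sup (f j ` {a..b}) + \<epsilon> n}"
    by blast
  have ec': "\<And>n j. j \<in> {1..k} \<Longrightarrow> set_mset (Lt n j) \<subseteq> {Inf (f j ` {a..b}) - \<epsilon> n .. Sup (f j ` {a..b}) + \<epsilon> n}"
    using ec by blast
  show ?thesis
    by (rule main_ctx[OF ab k bdd cont_ae ER dn distr part card e0 ec'])
qed

end
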